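(* Let the problem data, partition, residuals, augmented Lagrangian and primal updates be as described in the context. Let initial values $X^0_i\in[-u,u]$, $Z^0\in[-u,u]$, $Y^{c,0}_i\in[0,u^c_{Y_i}]$, $\mu^{c,0}_i\in[0,u^c_{\mu_i}]$ be given, and generate the primal sequences by (U1)–(U3) and the dual sequences by the descent rule (D). Then for every $K\in\mathbb N$, $$ L^0\ge L^K+\sum_{i=1}^N\sum_{k=1}^K\sum_{c\in\mathcal C}\sum_j \alpha^{c,k}_{i,j}\,\big|(r^{c,k}_i)_j\big|^2+\sum_{k=0}^{K-1}P^k+\sum_{i=1}^N\sum_{k=0}^{K-1}\sum_{l=1}^M\Big({}^{1}\sigma^k_{i,l}\|X^k_{i,l}-X^{k+1}_{i,l}\|_1+U^k_{i,l}\Big), $$ where $r^{c,k}_i:=r^c_i(X^k_i,Z^k,Y^{c,k}_i)$, $L^k:=\sum_i L_i(X^k_i,Z^k,(Y^{c,k}_i)_c,(\mu^{c,k}_i)_c)$, $$ P^k:=\sum_{i=1}^N\Big[\sum_{l}{}^{2}\sigma^k_{i,l}\|X^{k+1}_{i,l}-X^k_{i,l}\|^2+\rho_i\|X^{k+1}_i-X^k_i\|^2+(\tau^k+\rho_i)\|Z^{k+1}-Z^k\|^2+\sum_{c\in\mathcal C}\Big(\gamma^{c,k}_i+\tfrac{\rho_i}{2}\Big)\|Y^{c,k+1}_i-Y^{c,k}_i\|^2 $$ $$ \qquad+\tfrac{\rho_i}{2}\sum_{l}\Big(\|F_i(X^{k+1,k+1}_{i,l})-F_i(X^{k+1,k}_{i,l})\|^2+\|G_{i,l}(X^{k+1}_{i,l}-X^k_{i,l})\|^2+2\|H_{i,l}(X^{k+1}_{i,l}-X^k_{i,l})\|^2\Big)\Big],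 $$ and $$ U^k_{i,l}:=\Big\langle \mu^{F,k}_i+\rho_i\big(F_i(X^{k+1,k+1}_{i,l})+Y^{F,k}_i\big),\ F_i(X^{k+1,k}_{i,l})-F_i(X^{k+1,k+1}_{i,l})-\big(\nabla_{X_{i,l}}F_i(X^{k+1,k+1}_{i,l})\big)^{\!T}\!\!\cdot(X^k_{i,l}-X^{k+1}_{i,l})\Big\rangle, $$ the last product denoting the vector whose $j$-th entry is $(X^k_{i,l}-X^{k+1}_{i,l})^T\nabla_{X_{i,l}}(F_i)_j(X^{k+1,k+1}_{i,l})$.
   Context: Problem data. $n,N,M\in\mathbb N$. $u\in\mathbb R^n$ with $u>0$. $f(Z)=\langle f_0,Z\rangle$ is linear on $\mathbb R^n$. For each $i=1,\dots,N$: $F_i:\mathbb R^n\to\mathbb R^{p_i}$ has convex quadratic components (each component of the form $a(Z)+c(Z)^2$ or $c(Z)^2-a(Z)b(Z)$ with $a,b,c$ affine, convex on $[-u,u]$); $G_i:\mathbb R^n\to\mathbb R^{q_i}$ and $H_i:\mathbb R^n\to\mathbb R^{s_i}$ are affine. Vectors in $\mathbb R^n$ are partitioned into $M$ disjoint subvectors $Z=(Z_1,\dots,Z_M)$, $Z_l\in\mathbb R^{m_l}$, $\sum_l m_l=n$, the same partition for every $X_i\in\mathbb R^n$; correspondingly $u=(u_1,\dots,u_M)$, $f(Z)=\sum_l\langle f_l,Z_l\rangle$, $G_i(Z)=\sum_l G_{i,l}Z_l+G_{i,0}$, $H_i(Z)=\sum_l H_{i,l}Z_l+H_{i,0}$ with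 matrices $G_{i,l},H_{i,l}$. Slack variables and residuals. Let $\mathcal C=\{pX,nX,F,G,pH,nH\}$. For each $i$ there are slack vectors $Y^{pX}_i,Y^{nX}_i\in\mathbb R^n$, $Y^F_i\in\mathbb R^{p_i}$, $Y^G_i\in\mathbb R^{q_i}$, $Y^{pH}_i,Y^{nH}_i\in\mathbb R^{s_i}$, with given positive upper bound vectors $u^c_{Y_i}$ (slack boxes $[0,u^c_{Y_i}]$), and dual vectors $\mu^c_i$ of the same sizes. Residuals: $r^{pX}_i=X_i-Z+Y^{pX}_i$, $r^{nX}_i=Z-X_i+Y^{nX}_i$, $r^F_i=F_i(X_i)+Y^F_i$, $r^G_i=G_i(X_i)+Y^G_i$, $r^{pH}_i=H_i(X_i)+Y^{pH}_i$, $r^{nH}_i=-H_i(X_i)+Y^{nH}_i$. With $\rho_i>0$, the augmented Lagrangian of block $i$ is $$L_i=f(X_i)+\sum_{c\in\mathcal C}\langle\mu^c_i,r^c_i\rangle+\frac{\rho_i}{2}\sum_{c\in\mathcal C}\|r^c_i\|^2.$$ Gauss–Seidel notation: $X^{k+1,k}_{i,l}:=(X^{k+1}_{i,1},\dots,X^{k+1}_{i,l-1},X^k_{i,l},X^k_{i,l+1},\dots,X^k_{i,M})$ and $X^{k+1,k+1}_{i,l}:=(X^{k+1}_{i,1},\dots,X^{k+1}_{i,l},X^k_{i,l+1},\dots,X^k_{i,M})$. Parameters: ${}^{1}\sigma^k_{i,l}\ge0$, ${}^{2}\sigma^k_{i,l}>0$, $\tau^k>0$, $\gamma^{c,k}_i>0$.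 Updates at iteration $k$ (for each $i$): (U1) For $l=1,\dots,M$ in order, $X^{k+1}_{i,l}$ is the minimizer over $X_{i,l}\in[-u_l,u_l]$ of $L_i\big((X^{k+1}_{i,1},\dots,X^{k+1}_{i,l-1},X_{i,l},X^k_{i,l+1},\dots,X^k_{i,M}),Z^k,(Y^{c,k}_i)_c,(\mu^{c,k}_i)_c\big)+{}^{1}\sigma^k_{i,l}\|X_{i,l}-X^k_{i,l}\|_1+\tfrac{{}^{2}\sigma^k_{i,l}}{2}\|X_{i,l}-X^k_{i,l}\|^2$. (U2) $Z^{k+1}$ is the minimizer over $Z\in[-u,u]$ of $\sum_{i=1}^N\Big(\langle\mu^{pX,k}_i,X^{k+1}_i-Z+Y^{pX,k}_i\rangle+\langle\mu^{nX,k}_i,Z-X^{k+1}_i+Y^{nX,k}_i\rangle+\tfrac{\rho_i}{2}\big(\|X^{k+1}_i-Z+Y^{pX,k}_i\|^2+\|Z-X^{k+1}_i+Y^{nX,k}_i\|^2\big)+\tfrac{\tau^k}{2}\|Z-Z^k\|^2\Big)$. (U3) For each $c\in\mathcal C$, $Y^{c,k+1}_i$ is the minimizer over $Y\in[0,u^c_{Y_i}]$ of $\langle\mu^{c,k}_i,r^c_i(X^{k+1}_i,Z^{k+1},Y)\rangle+\tfrac{\rho_i}{2}\|r^c_i(X^{k+1}_i,Z^{k+1},Y)\|^2+\tfrac{\gamma^{c,k}_i}{2}\|Y-Y^{c,k}_i\|^2$, where $r^c_i(X_i,Z,Y)$ denotes the residual $r^c_i$ with $Y^c_i=Y$. Dual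 descent rule (D): given positive scalars $\alpha^c_i$ and positive dual upper-bound vectors $u^c_{\mu_i}$, set, with $r^{c,k+1}_i:=r^c_i(X^{k+1}_i,Z^{k+1},Y^{c,k+1}_i)$, $\mu^{c,k+1}_i:=\mu^{c,k}_i-\alpha^{c,k+1}_i\,r^{c,k+1}_i$, where $\alpha^{c,k+1}_i$ is the diagonal matrix with entries $\alpha^{c,k+1}_{i,j}=\alpha^c_i$ if $\mu^{c,k}_{i,j}-\alpha^c_i(r^{c,k+1}_i)_j\in[0,(u^c_{\mu_i})_j]$ and $\alpha^{c,k+1}_{i,j}=0$ otherwise. *)

theory Defs
  imports "HOL-Analysis.Analysis"
begin

text \<open>Vectors of R^d are represented as functions nat => real; only the
coordinates j < d matter (all quantities below only look at them).\<close>

type_synonym vec = "nat \<Rightarrow> real"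

datatype cat = CpX | CnX | CF | CG | CpH | CnH

definition cats :: "cat set" where
  "cats = {CpX, CnX, CF, CG, CpH, CnH}"

text \<open>Dimension of the slack / dual vector of class c for a block with
dimensions p, q, s (and ambient dimension n).\<close>
definition cdim :: "nat \<Rightarrow> nat \<Rightarrow> nat \<Rightarrow> nat \<Rightarrow> cat \<Rightarrow> nat" where
  "cdim n p q s c = (case c of CpX \<Rightarrow> n | CnX \<Rightarrow> n | CF \<Rightarrow> p | CG \<Rightarrow> q | CpH \<Rightarrow> s | CnH \<Rightarrow> s)"

definition inner_d :: "nat \<Rightarrow> vec \<Rightarrow> vec \<Rightarrow> real" where
  "inner_d d x y = (\<Sum>j<d. x j * y j)"

definition sqnorm :: "nat \<Rightarrow> vec \<Rightarrow> real" where
  "sqnorm d x = (\<Sum>j<d. (x j)\<^sup>2)"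

definition vdiff :: "vec \<Rightarrow> vec \<Rightarrow> vec" where
  "vdiff x y = (\<lambda>j. x j - y j)"

definition in_box :: "nat \<Rightarrow> vec \<Rightarrow> vec \<Rightarrow> bool" where
  "in_box d u x \<longleftrightarrow> (\<forall>j<d. - u j \<le> x j \<and> x j \<le> u j)"

definition in_pbox :: "nat \<Rightarrow> vec \<Rightarrow> vec \<Rightarrow> bool" where
  "in_pbox d ub x \<longleftrightarrow> (\<forall>j<d. 0 \<le> x j \<and> x j \<le> ub j)"

text \<open>Partition of the coordinates {0..<n} into M blocks: coordinate j belongs to
block blk j. The l-th block is the index set blk_set n blk l.\<close>
definition blk_set :: "nat \<Rightarrow> (nat \<Rightarrow> nat) \<Rightarrow> nat \<Rightarrow> nat set" where
  "blk_set n blk l = {j. j < n \<and> blk j = l}"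

definition in_block_box :: "nat \<Rightarrow> vec \<Rightarrow> (nat \<Rightarrow> nat) \<Rightarrow> nat \<Rightarrow> vec \<Rightarrow> bool" where
  "in_block_box n u blk l x \<longleftrightarrow> (\<forall>j\<in>blk_set n blk l. - u j \<le> x j \<and> x j \<le> u j)"

text \<open>Gauss-Seidel mixed vector: blocks with index < l taken from Xnew, the rest
from Xold.  With 0-based blocks, GS blk Xold Xnew l is X^{k+1,k}_{i,l} and
GS blk Xold Xnew (l+1) is X^{k+1,k+1}_{i,l}.\<close>
definition GS :: "(nat \<Rightarrow> nat) \<Rightarrow> vec \<Rightarrow> vec \<Rightarrow> nat \<Rightarrow> vec" where
  "GS blk Xold Xnew l = (\<lambda>j. if blk j < l then Xnew j else Xold j)"

definition affmap :: "nat \<Rightarrow> (nat \<Rightarrow> nat \<Rightarrow> real) \<Rightarrow> vec \<Rightarrow> vec \<Rightarrow> vec" where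
  "affmap n A b Z = (\<lambda>r. (\<Sum>j<n. A r j * Z j) + b r)"

definition blkmap :: "nat \<Rightarrow> (nat \<Rightarrow> nat) \<Rightarrow> nat \<Rightarrow> (nat \<Rightarrow> nat \<Rightarrow> real) \<Rightarrow> vec \<Rightarrow> vec" where
  "blkmap n blk l A D = (\<lambda>r. \<Sum>j\<in>blk_set n blk l. A r j * D j)"

definition affine_fn :: "nat \<Rightarrow> (vec \<Rightarrow> real) \<Rightarrow> bool" where
  "affine_fn n g \<longleftrightarrow> (\<exists>w w0. \<forall>Z. g Z = (\<Sum>j<n. w j * Z j) + w0)"

definition quad_comp :: "nat \<Rightarrow> (vec \<Rightarrow> real) \<Rightarrow> bool" where
  "quad_comp n g \<longleftrightarrow> (\<exists>a b c. affine_fn n a \<and> affine_fn n b \<and> affine_fn n c \<and>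
      ((\<forall>Z. g Z = a Z + (c Z)\<^sup>2) \<or> (\<forall>Z. g Z = (c Z)\<^sup>2 - a Z * b Z)))"

definition convex_on_box :: "nat \<Rightarrow> vec \<Rightarrow> (vec \<Rightarrow> real) \<Rightarrow> bool" where
  "convex_on_box n u g \<longleftrightarrow> (\<forall>x y t. in_box n u x \<longrightarrow> in_box n u y \<longrightarrow> 0 \<le> t \<longrightarrow> t \<le> 1 \<longrightarrow>
      g (\<lambda>j. t * x j + (1 - t) * y j) \<le> t * g x + (1 - t) * g y)"

definition partial_d :: "(vec \<Rightarrow> real) \<Rightarrow> vec \<Rightarrow> nat \<Rightarrow> real" where
  "partial_d g Z j = deriv (\<lambda>t. g (Z(j := t))) (Z j)"

definition res :: "(vec \<Rightarrow> vec) \<Rightarrow> (vec \<Rightarrow> vec) \<Rightarrow> (vec \<Rightarrow> vec) \<Rightarrow> cat \<Rightarrow> vec \<Rightarrow> vec \<Rightarrow> vec \<Rightarrow> vec" where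
  "res Fi Gi Hi c X Z Y = (case c of
      CpX \<Rightarrow> (\<lambda>j. X j - Z j + Y j)
    | CnX \<Rightarrow> (\<lambda>j. Z j - X j + Y j)
    | CF \<Rightarrow> (\<lambda>j. Fi X j + Y j)
    | CG \<Rightarrow> (\<lambda>j. Gi X j + Y j)
    | CpH \<Rightarrow> (\<lambda>j. Hi X j + Y j)
    | CnH \<Rightarrow> (\<lambda>j. - Hi X j + Y j))"

definition Lag :: "nat \<Rightarrow> nat \<Rightarrow> nat \<Rightarrow> nat \<Rightarrow> vec \<Rightarrow> (vec \<Rightarrow> vec) \<Rightarrow> (vec \<Rightarrow> vec) \<Rightarrow> (vec \<Rightarrow> vec)
    \<Rightarrow> real \<Rightarrow> vec \<Rightarrow> vec \<Rightarrow> (cat \<Rightarrow> vec) \<Rightarrow> (cat \<Rightarrow> vec) \<Rightarrow> real" where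
  "Lag n p q s f0 Fi Gi Hi rho X Z Y mu =
     inner_d n f0 X
     + (\<Sum>c\<in>cats. inner_d (cdim n p q s c) (mu c) (res Fi Gi Hi c X Z (Y c))
         + rho / 2 * sqnorm (cdim n p q s c) (res Fi Gi Hi c X Z (Y c)))"

definition alphaD :: "real \<Rightarrow> real \<Rightarrow> real \<Rightarrow> real \<Rightarrow> real" where
  "alphaD a ub m r = (if 0 \<le> m - a * r \<and> m - a * r \<le> ub then a else 0)"

end

theory Submission
  imports Defs
begin
lemma deriv_nonneg:
  fixes \<phi> :: "real \<Rightarrow> real"
  assumes d: "(\<phi> has_real_derivative a) (at 0)"
    and m: "\<And>t. 0 < t \<Longrightarrow> t \<le> 1 \<Longrightarrow> \<phi> 0 \<le> \<phi> t"
  shows "0 \<le> a"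
proof -
  have "((\<lambda>y. (\<phi> y - \<phi> 0) / (y - 0)) \<longlongrightarrow> a) (at 0)"
    using d by (simp add: has_field_derivative_iff)
  hence l: "((\<lambda>y. (\<phi> y - \<phi> 0) / (y - 0)) \<longlongrightarrow> a) (at_right 0)"
    by (rule filterlim_mono) (auto simp: at_within_le_at)
  have "\<forall>\<^sub>F y in at_right 0. 0 \<le> (\<phi> y - \<phi> 0) / (y - 0)"
    unfolding eventually_at_right_field
  proof (rule exI[of _ 1], intro conjI allI impI)
    fix y :: real assume "0 < y" "y < 1"
    then show "0 \<le> (\<phi> y - \<phi> 0) / (y - 0)" using m[of y] by (auto intro!: divide_nonneg_pos)
  qed simp
  thus ?thesis using tendsto_lowerbound[OF l] by auto
qed

lemma first_order:
  fixes \<phi> :: "real \<Rightarrow> real"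
  assumes d: "(\<phi> has_real_derivative a) (at 0)"
    and m: "\<And>t. 0 < t \<Longrightarrow> t \<le> 1 \<Longrightarrow> \<phi> 0 + c1 + c2 \<le> \<phi> t + (1-t)*c1 + (1-t)^2*c2"
  shows "c1 + 2*c2 \<le> a"
proof -
  have "((\<lambda>t. \<phi> t + (1-t)*c1 + (1-t)^2*c2) has_real_derivative (a - c1 - 2*c2)) (at 0)"
    by (rule derivative_eq_intros d refl | simp)+
  from deriv_nonneg[OF this] m show ?thesis by simp
qed

definition Tc :: "nat \<Rightarrow> real \<Rightarrow> vec \<Rightarrow> vec \<Rightarrow> real" where
  "Tc d rho m R = inner_d d m R + rho/2 * sqnorm d R"

lemma Lag_expand:
  "Lag n p q s f0 Fi Gi Hi rho X Z Y mu = inner_d n f0 X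
    + Tc n rho (mu CpX) (\<lambda>j. X j - Z j + Y CpX j)
    + Tc n rho (mu CnX) (\<lambda>j. Z j - X j + Y CnX j)
    + Tc p rho (mu CF) (\<lambda>j. Fi X j + Y CF j)
    + Tc q rho (mu CG) (\<lambda>j. Gi X j + Y CG j)
    + Tc s rho (mu CpH) (\<lambda>j. Hi X j + Y CpH j)
    + Tc s rho (mu CnH) (\<lambda>j. - Hi X j + Y CnH j)"
  unfolding Lag_def cats_def Tc_def by (simp add: cdim_def res_def algebra_simps)

lemma Tc_deriv:
  assumes "\<And>j. j<d \<Longrightarrow> ((\<lambda>t. R t j) has_real_derivative R' j) (at 0)"
  shows "((\<lambda>t. Tc d rho m (R t)) has_real_derivative (inner_d d m R' + rho * inner_d d (R 0) R')) (at 0)"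
proof -
  have h1: "((\<lambda>t. \<Sum>j<d. m j * R t j) has_real_derivative (\<Sum>j<d. m j * R' j)) (at 0)"
    by (rule DERIV_sum) (auto intro!: DERIV_cmult assms)
  have h2: "((\<lambda>t. \<Sum>j<d. (R t j)\<^sup>2) has_real_derivative (\<Sum>j<d. 2 * R 0 j * R' j)) (at 0)"
  proof (rule DERIV_sum)
    fix j assume "j \<in> {..<d}"
    then have "((\<lambda>t. R t j * R t j) has_real_derivative (R' j * R 0 j + R' j * R 0 j)) (at 0)"
      by (intro DERIV_mult assms) auto
    then show "((\<lambda>t. (R t j)\<^sup>2) has_real_derivative 2 * R 0 j * R' j) (at 0)"
      by (simp add: power2_eq_square algebra_simps)
  qed
  have "((\<lambda>t. (\<Sum>j<d. m j * R t j) + rho/2 * (\<Sum>j<d. (R t j)\<^sup>2)) has_real_derivative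
     ((\<Sum>j<d. m j * R' j) + rho/2 * (\<Sum>j<d. 2 * R 0 j * R' j))) (at 0)"
    by (intro DERIV_add DERIV_cmult h1 h2)
  moreover have "rho/2 * (\<Sum>j<d. 2 * R 0 j * R' j) = rho * (\<Sum>j<d. R 0 j * R' j)"
    by (simp add: sum_distrib_left algebra_simps)
  ultimately show ?thesis unfolding Tc_def inner_d_def sqnorm_def by metis
qed

lemma Tc_id:
  "Tc d rho m R1 - Tc d rho m R0 = inner_d d m R' + rho * inner_d d R0 R'
     + inner_d d (\<lambda>j. m j + rho * R0 j) (\<lambda>j. R1 j - R0 j - R' j) + rho/2 * sqnorm d (\<lambda>j. R1 j - R0 j)"
  unfolding Tc_def inner_d_def sqnorm_def
  by (simp add: sum_distrib_left sum.distrib[symmetric] sum_subtractf[symmetric] power2_eq_square algebra_simps)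

lemma aff_dir: fixes w V D :: vec shows "(\<Sum>j<n. w j * (V j + t * D j)) = (\<Sum>j<n. w j * V j) + t * (\<Sum>j<n. w j * D j)"
  by (simp add: sum_distrib_left sum.distrib[symmetric] algebra_simps)

lemma aff_upd:
  fixes w V :: vec
  assumes "j < n"
  shows "(\<Sum>i<n. w i * (V(j:=x)) i) = (\<Sum>i<n. w i * V i) + w j * (x - V j)"
proof -
  have "(\<Sum>i<n. w i * (V(j:=x)) i) = (\<Sum>i<n. w i * V i + (if i = j then w j * (x - V j) else 0))"
    by (rule sum.cong) (auto simp: algebra_simps)
  also have "\<dots> = (\<Sum>i<n. w i * V i) + w j * (x - V j)"
    using assms by (simp add: sum.distrib algebra_simps)
  finally show ?thesis .
qed

lemma quad_deriv:
  assumes "quad_comp n g"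
  shows "((\<lambda>t. g (\<lambda>j. V j + t * D j)) has_real_derivative (\<Sum>j<n. D j * partial_d g V j)) (at 0)"
proof -
  obtain a b c where ha: "affine_fn n a" and hb: "affine_fn n b" and hc: "affine_fn n c"
    and form: "(\<forall>Z. g Z = a Z + (c Z)\<^sup>2) \<or> (\<forall>Z. g Z = (c Z)\<^sup>2 - a Z * b Z)"
    using assms unfolding quad_comp_def by blast
  from ha obtain wa wa0 where a: "\<forall>Z. a Z = (\<Sum>j<n. wa j * Z j) + wa0" unfolding affine_fn_def by blast
  from hb obtain wb wb0 where b: "\<forall>Z. b Z = (\<Sum>j<n. wb j * Z j) + wb0" unfolding affine_fn_def by blast
  from hc obtain wc wc0 where c: "\<forall>Z. c Z = (\<Sum>j<n. wc j * Z j) + wc0" unfolding affine_fn_def by blast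
  define A where "A = (\<Sum>j<n. wa j * D j)"
  define B where "B = (\<Sum>j<n. wb j * D j)"
  define C where "C = (\<Sum>j<n. wc j * D j)"
  have pa: "\<And>j x. j<n \<Longrightarrow> a (V(j:=x)) = a V + wa j * (x - V j)" using a aff_upd by simp
  have pb: "\<And>j x. j<n \<Longrightarrow> b (V(j:=x)) = b V + wb j * (x - V j)" using b aff_upd by simp
  have pc: "\<And>j x. j<n \<Longrightarrow> c (V(j:=x)) = c V + wc j * (x - V j)" using c aff_upd by simp
  have da: "\<And>t. a (\<lambda>j. V j + t*D j) = a V + t * A" using a aff_dir unfolding A_def by simp
  have db: "\<And>t. b (\<lambda>j. V j + t*D j) = b V + t * B" using b aff_dir unfolding B_def by simp
  have dc: "\<And>t. c (\<lambda>j. V j + t*D j) = c V + t * C" using c aff_dir unfolding C_def by simp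
  from form show ?thesis
  proof
    assume g: "\<forall>Z. g Z = a Z + (c Z)\<^sup>2"
    have part: "partial_d g V j = wa j + 2 * c V * wc j" if "j<n" for j
    proof -
      have e: "(\<lambda>x. g (V(j:=x))) = (\<lambda>x. a V + wa j * (x - V j) + (c V + wc j * (x - V j))\<^sup>2)"
        using that by (simp add: g pa pc)
      have "((\<lambda>x. a V + wa j * (x - V j) + (c V + wc j * (x - V j))\<^sup>2) has_real_derivative
               (wa j + 2 * c V * wc j)) (at (V j))"
        by (auto intro!: derivative_eq_intros)
      then show ?thesis unfolding partial_d_def e by (rule DERIV_imp_deriv)
    qed
    have e: "(\<lambda>t. g (\<lambda>j. V j + t * D j)) = (\<lambda>t. a V + t * A + (c V + t * C)\<^sup>2)"
      by (simp add: g da dc)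
    have "((\<lambda>t. a V + t * A + (c V + t * C)\<^sup>2) has_real_derivative (A + 2 * c V * C)) (at 0)"
      by (auto intro!: derivative_eq_intros)
    moreover have "(\<Sum>j<n. D j * partial_d g V j) = A + 2 * c V * C"
      by (simp add: part A_def C_def sum_distrib_left algebra_simps sum.distrib)
    ultimately show ?thesis by (simp add: e)
  next
    assume g: "\<forall>Z. g Z = (c Z)\<^sup>2 - a Z * b Z"
    have part: "partial_d g V j = 2 * c V * wc j - (wa j * b V + a V * wb j)" if "j<n" for j
    proof -
      have e: "(\<lambda>x. g (V(j:=x))) = (\<lambda>x. (c V + wc j * (x - V j))\<^sup>2 - (a V + wa j * (x - V j)) * (b V + wb j * (x - V j)))"
        using that by (simp add: g pa pb pc)
      have "((\<lambda>x. (c V + wc j * (x - V j))\<^sup>2 - (a V + wa j * (x - V j)) * (b V + wb j * (x - V j))) has_real_derivative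
               (2 * c V * wc j - (wa j * b V + a V * wb j))) (at (V j))"
        by (auto intro!: derivative_eq_intros simp: algebra_simps)
      then show ?thesis unfolding partial_d_def e by (rule DERIV_imp_deriv)
    qed
    have e: "(\<lambda>t. g (\<lambda>j. V j + t * D j)) = (\<lambda>t. (c V + t * C)\<^sup>2 - (a V + t * A) * (b V + t * B))"
      by (simp add: g da db dc)
    have "((\<lambda>t. (c V + t * C)\<^sup>2 - (a V + t * A) * (b V + t * B)) has_real_derivative (2 * c V * C - (A * b V + a V * B))) (at 0)"
      by (auto intro!: derivative_eq_intros simp: algebra_simps)
    moreover have "(\<Sum>j<n. D j * partial_d g V j) = 2 * c V * C - (A * b V + a V * B)"
      by (simp add: part A_def B_def C_def sum_distrib_left sum_distrib_right algebra_simps sum.distrib sum_subtractf)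
    ultimately show ?thesis by (simp add: e)
  qed
qed

lemma blk_sum:
  "(\<Sum>j<n. if blk j = l then f j else 0) = (\<Sum>j\<in>blk_set n blk l. (f j :: real))"
proof -
  have "{j\<in>{..<n}. blk j = l} = blk_set n blk l" by (auto simp: blk_set_def)
  moreover have "(\<Sum>j<n. if blk j = l then f j else 0) = (\<Sum>j\<in>{j\<in>{..<n}. blk j = l}. f j)"
    by (rule sum.inter_filter[symmetric]) simp
  ultimately show ?thesis by simp
qed

lemma conv_lb:
  fixes t x y a :: real
  assumes "0 \<le> t" "t \<le> 1" "a \<le> x" "a \<le> y"
  shows "a \<le> (1-t)*x + t*y"
proof -
  have "0 \<le> (1-t)*(x-a)" "0 \<le> t*(y-a)" using assms by auto
  then show ?thesis by (simp add: algebra_simps)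
qed

lemma conv_ub:
  fixes t x y a :: real
  assumes "0 \<le> t" "t \<le> 1" "x \<le> a" "y \<le> a"
  shows "(1-t)*x + t*y \<le> a"
proof -
  have "0 \<le> (1-t)*(a-x)" "0 \<le> t*(a-y)" using assms by auto
  then show ?thesis by (simp add: algebra_simps)
qed

lemma inner_zero: "(\<And>j. j<d \<Longrightarrow> y j = 0) \<Longrightarrow> inner_d d x y = 0"
  unfolding inner_d_def by simp

lemma sqnorm_cong_sq: "(\<And>j. j<d \<Longrightarrow> (x j)\<^sup>2 = (y j)\<^sup>2) \<Longrightarrow> sqnorm d x = sqnorm d y"
  unfolding sqnorm_def by simp

lemma affmap_dir: "affmap n A b (\<lambda>j. V j + t * D j) r = affmap n A b V r + t * (\<Sum>j<n. A r j * D j)"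
  unfolding affmap_def using aff_dir[where w="A r" and V=V and t=t and D=D and n=n] by simp

lemma inner_deriv:
  "((\<lambda>t. inner_d n f0 (\<lambda>j. V j + t * D j)) has_real_derivative inner_d n f0 D) (at 0)"
  unfolding inner_d_def by (rule DERIV_sum) (auto intro!: derivative_eq_intros)

lemma xstep:
  fixes n p q s l :: nat and rho :: real and blk :: "nat \<Rightarrow> nat" and Fi :: "vec \<Rightarrow> vec" and Gm Hm :: "nat \<Rightarrow> nat \<Rightarrow> real" and G0 H0 f0 X0 X1 Z u :: vec
    and Y mu :: "cat \<Rightarrow> vec"
  defines "Vs \<equiv> GS blk X0 X1 (Suc l)" and "Vo \<equiv> GS blk X0 X1 l"
    and "Lg \<equiv> \<lambda>V. Lag n p q s f0 Fi (affmap n Gm G0) (affmap n Hm H0) rho V Z Y mu"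
  assumes quad: "\<forall>t<p. quad_comp n (\<lambda>V. Fi V t)"
    and box0: "in_box n u X0" and box1: "in_block_box n u blk l X1"
    and minim: "\<forall>W. in_block_box n u blk l W \<longrightarrow>
        (let obj = (\<lambda>V. Lag n p q s f0 Fi (affmap n Gm G0) (affmap n Hm H0) rho V Z Y mu
                 + sig1 * (\<Sum>j\<in>blk_set n blk l. \<bar>V j - X0 j\<bar>)
                 + sig2 / 2 * (\<Sum>j\<in>blk_set n blk l. (V j - X0 j)\<^sup>2))
         in obj (GS blk X0 X1 (Suc l)) \<le> obj (\<lambda>j. if blk j = l then W j else GS blk X0 X1 l j))"
  shows "Lg Vo - Lg Vs \<ge>
     sig1 * (\<Sum>j\<in>blk_set n blk l. \<bar>X0 j - X1 j\<bar>) + sig2 * (\<Sum>j\<in>blk_set n blk l. (X1 j - X0 j)\<^sup>2)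
     + rho * (\<Sum>j\<in>blk_set n blk l. (X1 j - X0 j)\<^sup>2)
     + inner_d p (\<lambda>t. mu CF t + rho * (Fi Vs t + Y CF t))
         (\<lambda>t. Fi Vo t - Fi Vs t - (\<Sum>j\<in>blk_set n blk l. (X0 j - X1 j) * partial_d (\<lambda>V. Fi V t) Vs j))
     + rho/2 * (sqnorm p (vdiff (Fi Vs) (Fi Vo)) + sqnorm q (blkmap n blk l Gm (vdiff X1 X0))
                + 2 * sqnorm s (blkmap n blk l Hm (vdiff X1 X0)))"
proof -
  define D where "D = (\<lambda>j. if blk j = l then X0 j - X1 j else 0)"
  define W where "W = (\<lambda>t::real. \<lambda>j. Vs j + t * D j)"
  define S1 where "S1 = (\<Sum>j\<in>blk_set n blk l. \<bar>X1 j - X0 j\<bar>)"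
  define S2 where "S2 = (\<Sum>j\<in>blk_set n blk l. (X1 j - X0 j)\<^sup>2)"
  have W1: "W 1 = Vo" unfolding W_def D_def Vs_def Vo_def GS_def by auto
  have W0: "W 0 = Vs" unfolding W_def by simp
  have Wc: "(\<lambda>j. if blk j = l then (1-t)*X1 j + t*X0 j else Vo j) = W t" for t
    unfolding W_def D_def Vs_def Vo_def GS_def by (auto simp: algebra_simps)
  have boxc: "in_block_box n u blk l (\<lambda>j. (1-t)*X1 j + t*X0 j)" if "0 \<le> t" "t \<le> 1" for t
    unfolding in_block_box_def
  proof
    fix j assume j: "j \<in> blk_set n blk l"
    then have "j < n" unfolding blk_set_def by auto
    then have "- u j \<le> X0 j \<and> X0 j \<le> u j" using box0 unfolding in_box_def by auto
    moreover have "- u j \<le> X1 j \<and> X1 j \<le> u j" using box1 j unfolding in_block_box_def by auto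
    ultimately show "- u j \<le> (1-t)*X1 j + t*X0 j \<and> (1-t)*X1 j + t*X0 j \<le> u j"
      using that by (auto intro!: conv_lb conv_ub)
  qed
  have Wblk: "W t j - X0 j = (1-t) * (X1 j - X0 j)" if "j \<in> blk_set n blk l" for t j
    using that unfolding W_def D_def Vs_def GS_def blk_set_def by (auto simp: algebra_simps)
  have absW: "(\<Sum>j\<in>blk_set n blk l. \<bar>W t j - X0 j\<bar>) = (1-t) * S1" if "t \<le> 1" for t
  proof -
    have "(\<Sum>j\<in>blk_set n blk l. \<bar>W t j - X0 j\<bar>) = (\<Sum>j\<in>blk_set n blk l. (1-t) * \<bar>X1 j - X0 j\<bar>)"
      using that by (intro sum.cong) (auto simp: Wblk abs_mult)
    then show ?thesis unfolding S1_def by (simp add: sum_distrib_left)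
  qed
  have sqW: "(\<Sum>j\<in>blk_set n blk l. (W t j - X0 j)\<^sup>2) = (1-t)\<^sup>2 * S2" for t
  proof -
    have "(\<Sum>j\<in>blk_set n blk l. (W t j - X0 j)\<^sup>2) = (\<Sum>j\<in>blk_set n blk l. (1-t)\<^sup>2 * (X1 j - X0 j)\<^sup>2)"
      by (intro sum.cong) (auto simp: Wblk power_mult_distrib)
    then show ?thesis unfolding S2_def by (simp add: sum_distrib_left)
  qed
  have ineq: "Lg (W 0) + sig1 * S1 + sig2/2 * S2 \<le> Lg (W t) + (1-t) * (sig1 * S1) + (1-t)\<^sup>2 * (sig2/2 * S2)"
    if "0 < t" "t \<le> 1" for t
  proof -
    from minim boxc[of t] that
    have "Lg Vs + sig1 * (\<Sum>j\<in>blk_set n blk l. \<bar>Vs j - X0 j\<bar>) + sig2 / 2 * (\<Sum>j\<in>blk_set n blk l. (Vs j - X0 j)\<^sup>2)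
      \<le> Lg (W t) + sig1 * (\<Sum>j\<in>blk_set n blk l. \<bar>W t j - X0 j\<bar>) + sig2 / 2 * (\<Sum>j\<in>blk_set n blk l. (W t j - X0 j)\<^sup>2)"
      unfolding Lg_def Vs_def Vo_def Wc[symmetric] Let_def by auto
    then show ?thesis using absW[of 0] sqW[of 0] absW[of t] sqW[of t] that W0 by (simp add: ac_simps)
  qed
  define RpX where "RpX = (\<lambda>t. \<lambda>j. W t j - Z j + Y CpX j)"
  define RnX where "RnX = (\<lambda>t. \<lambda>j. Z j - W t j + Y CnX j)"
  define RF where "RF = (\<lambda>t. \<lambda>j. Fi (W t) j + Y CF j)"
  define RG where "RG = (\<lambda>t. \<lambda>j. affmap n Gm G0 (W t) j + Y CG j)"
  define RpH where "RpH = (\<lambda>t. \<lambda>j. affmap n Hm H0 (W t) j + Y CpH j)"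
  define RnH where "RnH = (\<lambda>t. \<lambda>j. - affmap n Hm H0 (W t) j + Y CnH j)"
  define al where "al = (\<lambda>t. \<Sum>j<n. D j * partial_d (\<lambda>V. Fi V t) Vs j)"
  define gD where "gD = (\<lambda>r. \<Sum>j<n. Gm r j * D j)"
  define hD where "hD = (\<lambda>r. \<Sum>j<n. Hm r j * D j)"
  have e: "Lg (W t) = inner_d n f0 (W t) + Tc n rho (mu CpX) (RpX t) + Tc n rho (mu CnX) (RnX t)
      + Tc p rho (mu CF) (RF t) + Tc q rho (mu CG) (RG t) + Tc s rho (mu CpH) (RpH t) + Tc s rho (mu CnH) (RnH t)" for t
    unfolding Lg_def Lag_expand RpX_def RnX_def RF_def RG_def RpH_def RnH_def ..
  have d0: "((\<lambda>t. inner_d n f0 (W t)) has_real_derivative inner_d n f0 D) (at 0)"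
    unfolding W_def by (rule inner_deriv)
  have d1: "((\<lambda>t. Tc n rho (mu CpX) (RpX t)) has_real_derivative (inner_d n (mu CpX) D + rho * inner_d n (RpX 0) D)) (at 0)"
    by (rule Tc_deriv) (auto simp: RpX_def W_def intro!: derivative_eq_intros)
  have d2: "((\<lambda>t. Tc n rho (mu CnX) (RnX t)) has_real_derivative (inner_d n (mu CnX) (\<lambda>j. - D j) + rho * inner_d n (RnX 0) (\<lambda>j. - D j))) (at 0)"
    by (rule Tc_deriv) (auto simp: RnX_def W_def intro!: derivative_eq_intros)
  have d3: "((\<lambda>t. Tc p rho (mu CF) (RF t)) has_real_derivative (inner_d p (mu CF) al + rho * inner_d p (RF 0) al)) (at 0)"
  proof (rule Tc_deriv)
    fix j assume "j < p"
    then have "((\<lambda>t. Fi (W t) j) has_real_derivative al j) (at 0)"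
      unfolding W_def al_def using quad_deriv[of n "\<lambda>V. Fi V j" Vs D] quad by auto
    then show "((\<lambda>t. RF t j) has_real_derivative al j) (at 0)"
      unfolding RF_def by (auto intro!: derivative_eq_intros)
  qed
  have d4: "((\<lambda>t. Tc q rho (mu CG) (RG t)) has_real_derivative (inner_d q (mu CG) gD + rho * inner_d q (RG 0) gD)) (at 0)"
    by (rule Tc_deriv) (auto simp: RG_def W_def affmap_dir gD_def intro!: derivative_eq_intros)
  have d5: "((\<lambda>t. Tc s rho (mu CpH) (RpH t)) has_real_derivative (inner_d s (mu CpH) hD + rho * inner_d s (RpH 0) hD)) (at 0)"
    by (rule Tc_deriv) (auto simp: RpH_def W_def affmap_dir hD_def intro!: derivative_eq_intros)
  have d6: "((\<lambda>t. Tc s rho (mu CnH) (RnH t)) has_real_derivative (inner_d s (mu CnH) (\<lambda>j. - hD j) + rho * inner_d s (RnH 0) (\<lambda>j. - hD j))) (at 0)"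
    by (rule Tc_deriv) (auto simp: RnH_def W_def affmap_dir hD_def intro!: derivative_eq_intros)
  define a where "a = inner_d n f0 D + (inner_d n (mu CpX) D + rho * inner_d n (RpX 0) D)
     + (inner_d n (mu CnX) (\<lambda>j. - D j) + rho * inner_d n (RnX 0) (\<lambda>j. - D j))
     + (inner_d p (mu CF) al + rho * inner_d p (RF 0) al)
     + (inner_d q (mu CG) gD + rho * inner_d q (RG 0) gD)
     + (inner_d s (mu CpH) hD + rho * inner_d s (RpH 0) hD)
     + (inner_d s (mu CnH) (\<lambda>j. - hD j) + rho * inner_d s (RnH 0) (\<lambda>j. - hD j))"
  have dphi: "((\<lambda>t. Lg (W t)) has_real_derivative a) (at 0)"
    unfolding e a_def by (intro DERIV_add d0 d1 d2 d3 d4 d5 d6)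
  have alow: "sig1 * S1 + 2 * (sig2/2 * S2) \<le> a"
    by (rule first_order[OF dphi]) (use ineq in auto)
  have id0: "inner_d n f0 (W 1) - inner_d n f0 (W 0) = inner_d n f0 D"
    unfolding inner_d_def W_def by (simp add: sum_subtractf[symmetric] algebra_simps)
  have i1: "Tc n rho (mu CpX) (RpX 1) - Tc n rho (mu CpX) (RpX 0) = inner_d n (mu CpX) D + rho * inner_d n (RpX 0) D
     + inner_d n (\<lambda>j. mu CpX j + rho * RpX 0 j) (\<lambda>j. RpX 1 j - RpX 0 j - D j) + rho/2 * sqnorm n (\<lambda>j. RpX 1 j - RpX 0 j)"
    by (rule Tc_id)
  have i2: "Tc n rho (mu CnX) (RnX 1) - Tc n rho (mu CnX) (RnX 0) = inner_d n (mu CnX) (\<lambda>j. - D j) + rho * inner_d n (RnX 0) (\<lambda>j. - D j)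
     + inner_d n (\<lambda>j. mu CnX j + rho * RnX 0 j) (\<lambda>j. RnX 1 j - RnX 0 j - - D j) + rho/2 * sqnorm n (\<lambda>j. RnX 1 j - RnX 0 j)"
    by (rule Tc_id)
  have i3: "Tc p rho (mu CF) (RF 1) - Tc p rho (mu CF) (RF 0) = inner_d p (mu CF) al + rho * inner_d p (RF 0) al
     + inner_d p (\<lambda>j. mu CF j + rho * RF 0 j) (\<lambda>j. RF 1 j - RF 0 j - al j) + rho/2 * sqnorm p (\<lambda>j. RF 1 j - RF 0 j)"
    by (rule Tc_id)
  have i4: "Tc q rho (mu CG) (RG 1) - Tc q rho (mu CG) (RG 0) = inner_d q (mu CG) gD + rho * inner_d q (RG 0) gD
     + inner_d q (\<lambda>j. mu CG j + rho * RG 0 j) (\<lambda>j. RG 1 j - RG 0 j - gD j) + rho/2 * sqnorm q (\<lambda>j. RG 1 j - RG 0 j)"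
    by (rule Tc_id)
  have i5: "Tc s rho (mu CpH) (RpH 1) - Tc s rho (mu CpH) (RpH 0) = inner_d s (mu CpH) hD + rho * inner_d s (RpH 0) hD
     + inner_d s (\<lambda>j. mu CpH j + rho * RpH 0 j) (\<lambda>j. RpH 1 j - RpH 0 j - hD j) + rho/2 * sqnorm s (\<lambda>j. RpH 1 j - RpH 0 j)"
    by (rule Tc_id)
  have i6: "Tc s rho (mu CnH) (RnH 1) - Tc s rho (mu CnH) (RnH 0) = inner_d s (mu CnH) (\<lambda>j. - hD j) + rho * inner_d s (RnH 0) (\<lambda>j. - hD j)
     + inner_d s (\<lambda>j. mu CnH j + rho * RnH 0 j) (\<lambda>j. RnH 1 j - RnH 0 j - - hD j) + rho/2 * sqnorm s (\<lambda>j. RnH 1 j - RnH 0 j)"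
    by (rule Tc_id)
  have z1: "inner_d n (\<lambda>j. mu CpX j + rho * RpX 0 j) (\<lambda>j. RpX 1 j - RpX 0 j - D j) = 0"
    by (rule inner_zero) (simp add: RpX_def W_def)
  have z2: "inner_d n (\<lambda>j. mu CnX j + rho * RnX 0 j) (\<lambda>j. RnX 1 j - RnX 0 j - - D j) = 0"
    by (rule inner_zero) (simp add: RnX_def W_def)
  have z4: "inner_d q (\<lambda>j. mu CG j + rho * RG 0 j) (\<lambda>j. RG 1 j - RG 0 j - gD j) = 0"
    by (rule inner_zero) (simp add: RG_def W_def affmap_dir gD_def)
  have z5: "inner_d s (\<lambda>j. mu CpH j + rho * RpH 0 j) (\<lambda>j. RpH 1 j - RpH 0 j - hD j) = 0"
    by (rule inner_zero) (simp add: RpH_def W_def affmap_dir hD_def)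
  have z6: "inner_d s (\<lambda>j. mu CnH j + rho * RnH 0 j) (\<lambda>j. RnH 1 j - RnH 0 j - - hD j) = 0"
    by (rule inner_zero) (simp add: RnH_def W_def affmap_dir hD_def)
  have split: "Lg Vo - Lg Vs = (inner_d n f0 (W 1) - inner_d n f0 (W 0))
     + (Tc n rho (mu CpX) (RpX 1) - Tc n rho (mu CpX) (RpX 0))
     + (Tc n rho (mu CnX) (RnX 1) - Tc n rho (mu CnX) (RnX 0))
     + (Tc p rho (mu CF) (RF 1) - Tc p rho (mu CF) (RF 0))
     + (Tc q rho (mu CG) (RG 1) - Tc q rho (mu CG) (RG 0))
     + (Tc s rho (mu CpH) (RpH 1) - Tc s rho (mu CpH) (RpH 0))
     + (Tc s rho (mu CnH) (RnH 1) - Tc s rho (mu CnH) (RnH 0))"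
    unfolding W1[symmetric] W0[symmetric] e by simp
  define U where "U = inner_d p (\<lambda>j. mu CF j + rho * RF 0 j) (\<lambda>j. RF 1 j - RF 0 j - al j)"
  have main: "Lg Vo - Lg Vs = a + U + rho/2 * (sqnorm n (\<lambda>j. RpX 1 j - RpX 0 j) + sqnorm n (\<lambda>j. RnX 1 j - RnX 0 j)
     + sqnorm p (\<lambda>j. RF 1 j - RF 0 j) + sqnorm q (\<lambda>j. RG 1 j - RG 0 j) + sqnorm s (\<lambda>j. RpH 1 j - RpH 0 j)
     + sqnorm s (\<lambda>j. RnH 1 j - RnH 0 j))"
    unfolding split id0 i1 i2 i3 i4 i5 i6 z1 z2 z4 z5 z6 a_def U_def by (simp add: algebra_simps)
  have sqA: "sqnorm n (\<lambda>j. RpX 1 j - RpX 0 j) = S2"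
  proof -
    have "sqnorm n (\<lambda>j. RpX 1 j - RpX 0 j) = (\<Sum>j<n. if blk j = l then (X1 j - X0 j)\<^sup>2 else 0)"
      unfolding sqnorm_def by (rule sum.cong) (auto simp: RpX_def W_def D_def power2_commute)
    then show ?thesis unfolding S2_def blk_sum .
  qed
  have sqB: "sqnorm n (\<lambda>j. RnX 1 j - RnX 0 j) = S2"
  proof -
    have "sqnorm n (\<lambda>j. RnX 1 j - RnX 0 j) = (\<Sum>j<n. if blk j = l then (X1 j - X0 j)\<^sup>2 else 0)"
      unfolding sqnorm_def by (rule sum.cong) (auto simp: RnX_def W_def D_def power2_commute)
    then show ?thesis unfolding S2_def blk_sum .
  qed
  have sqF: "sqnorm p (\<lambda>j. RF 1 j - RF 0 j) = sqnorm p (vdiff (Fi Vs) (Fi Vo))"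
    by (rule sqnorm_cong_sq) (simp add: RF_def W1 W0 vdiff_def power2_commute)
  have gDe: "gD r = - blkmap n blk l Gm (vdiff X1 X0) r" for r
  proof -
    have "gD r = (\<Sum>j<n. if blk j = l then Gm r j * (X0 j - X1 j) else 0)"
      unfolding gD_def by (rule sum.cong) (auto simp: D_def)
    also have "\<dots> = - blkmap n blk l Gm (vdiff X1 X0) r"
      unfolding blk_sum blkmap_def vdiff_def by (simp add: sum_negf[symmetric] algebra_simps)
    finally show ?thesis .
  qed
  have hDe: "hD r = - blkmap n blk l Hm (vdiff X1 X0) r" for r
  proof -
    have "hD r = (\<Sum>j<n. if blk j = l then Hm r j * (X0 j - X1 j) else 0)"
      unfolding hD_def by (rule sum.cong) (auto simp: D_def)
    also have "\<dots> = - blkmap n blk l Hm (vdiff X1 X0) r"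
      unfolding blk_sum blkmap_def vdiff_def by (simp add: sum_negf[symmetric] algebra_simps)
    finally show ?thesis .
  qed
  have ale: "al t = (\<Sum>j\<in>blk_set n blk l. (X0 j - X1 j) * partial_d (\<lambda>V. Fi V t) Vs j)" for t
  proof -
    have "al t = (\<Sum>j<n. if blk j = l then (X0 j - X1 j) * partial_d (\<lambda>V. Fi V t) Vs j else 0)"
      unfolding al_def by (rule sum.cong) (auto simp: D_def)
    then show ?thesis unfolding blk_sum .
  qed
  have sqG: "sqnorm q (\<lambda>j. RG 1 j - RG 0 j) = sqnorm q (blkmap n blk l Gm (vdiff X1 X0))"
    by (rule sqnorm_cong_sq) (simp add: RG_def W_def affmap_dir gDe[unfolded gD_def])
  have sqH1: "sqnorm s (\<lambda>j. RpH 1 j - RpH 0 j) = sqnorm s (blkmap n blk l Hm (vdiff X1 X0))"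
    by (rule sqnorm_cong_sq) (simp add: RpH_def W_def affmap_dir hDe[unfolded hD_def])
  have sqH2: "sqnorm s (\<lambda>j. RnH 1 j - RnH 0 j) = sqnorm s (blkmap n blk l Hm (vdiff X1 X0))"
    by (rule sqnorm_cong_sq) (simp add: RnH_def W_def affmap_dir hDe[unfolded hD_def])
  have Ue: "U = inner_d p (\<lambda>t. mu CF t + rho * (Fi Vs t + Y CF t))
         (\<lambda>t. Fi Vo t - Fi Vs t - (\<Sum>j\<in>blk_set n blk l. (X0 j - X1 j) * partial_d (\<lambda>V. Fi V t) Vs j))"
    unfolding U_def by (simp add: RF_def W0 W1 ale)
  have S1e: "S1 = (\<Sum>j\<in>blk_set n blk l. \<bar>X0 j - X1 j\<bar>)"
    unfolding S1_def by (simp add: abs_minus_commute)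
  show ?thesis
    using main alow unfolding sqA sqB sqF sqG sqH1 sqH2 Ue S1e S2_def by (simp add: algebra_simps)
qed

lemma zstep:
  fixes n N :: nat and p q s :: "nat \<Rightarrow> nat" and rho :: "nat \<Rightarrow> real" and tau :: real
    and F :: "nat \<Rightarrow> vec \<Rightarrow> vec" and Gm Hm :: "nat \<Rightarrow> nat \<Rightarrow> nat \<Rightarrow> real" and G0 H0 :: "nat \<Rightarrow> vec"
    and X1 :: "nat \<Rightarrow> vec" and Y mu :: "nat \<Rightarrow> cat \<Rightarrow> vec" and Z0 Z1 u f0 :: vec
  assumes box0: "in_box n u Z0" and box1: "in_box n u Z1"
    and minim: "\<forall>W. in_box n u W \<longrightarrow>
          (let obj = (\<lambda>V. \<Sum>i<N.
                 inner_d n (mu i CpX) (res (F i) (affmap n (Gm i) (G0 i)) (affmap n (Hm i) (H0 i)) CpX (X1 i) V (Y i CpX))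
               + inner_d n (mu i CnX) (res (F i) (affmap n (Gm i) (G0 i)) (affmap n (Hm i) (H0 i)) CnX (X1 i) V (Y i CnX))
               + rho i / 2 * (sqnorm n (res (F i) (affmap n (Gm i) (G0 i)) (affmap n (Hm i) (H0 i)) CpX (X1 i) V (Y i CpX))
                              + sqnorm n (res (F i) (affmap n (Gm i) (G0 i)) (affmap n (Hm i) (H0 i)) CnX (X1 i) V (Y i CnX)))
               + tau / 2 * sqnorm n (vdiff V Z0))
           in obj Z1 \<le> obj W)"
  shows "(\<Sum>i<N. Lag n (p i) (q i) (s i) f0 (F i) (affmap n (Gm i) (G0 i)) (affmap n (Hm i) (H0 i)) (rho i) (X1 i) Z0 (Y i) (mu i))
       - (\<Sum>i<N. Lag n (p i) (q i) (s i) f0 (F i) (affmap n (Gm i) (G0 i)) (affmap n (Hm i) (H0 i)) (rho i) (X1 i) Z1 (Y i) (mu i))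
       \<ge> (\<Sum>i<N. (tau + rho i) * sqnorm n (vdiff Z1 Z0))"
proof -
  define E where "E = (\<lambda>j. Z0 j - Z1 j)"
  define W where "W = (\<lambda>t::real. \<lambda>j. Z1 j + t * E j)"
  define SZ where "SZ = sqnorm n (vdiff Z1 Z0)"
  have W1: "W 1 = Z0" and W0: "W 0 = Z1" unfolding W_def E_def by auto
  define RP where "RP = (\<lambda>i t. \<lambda>j. X1 i j - W t j + Y i CpX j)"
  define RN where "RN = (\<lambda>i t. \<lambda>j. W t j - X1 i j + Y i CnX j)"
  define psi where "psi = (\<lambda>t. \<Sum>i<N. Tc n (rho i) (mu i CpX) (RP i t) + Tc n (rho i) (mu i CnX) (RN i t))"
  define aT where "aT = (\<lambda>i. (inner_d n (mu i CpX) (\<lambda>j. - E j) + rho i * inner_d n (RP i 0) (\<lambda>j. - E j))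
        + (inner_d n (mu i CnX) E + rho i * inner_d n (RN i 0) E))"
  have dpsi: "(psi has_real_derivative (\<Sum>i<N. aT i)) (at 0)"
    unfolding psi_def aT_def
  proof (rule DERIV_sum, rule DERIV_add)
    fix i
    show "((\<lambda>t. Tc n (rho i) (mu i CpX) (RP i t)) has_real_derivative
        inner_d n (mu i CpX) (\<lambda>j. - E j) + rho i * inner_d n (RP i 0) (\<lambda>j. - E j)) (at 0)"
      by (rule Tc_deriv) (auto simp: RP_def W_def intro!: derivative_eq_intros)
    show "((\<lambda>t. Tc n (rho i) (mu i CnX) (RN i t)) has_real_derivative
        inner_d n (mu i CnX) E + rho i * inner_d n (RN i 0) E) (at 0)"
      by (rule Tc_deriv) (auto simp: RN_def W_def intro!: derivative_eq_intros)
  qed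
  have objeq: "(\<Sum>i<N.
                 inner_d n (mu i CpX) (res (F i) (affmap n (Gm i) (G0 i)) (affmap n (Hm i) (H0 i)) CpX (X1 i) V (Y i CpX))
               + inner_d n (mu i CnX) (res (F i) (affmap n (Gm i) (G0 i)) (affmap n (Hm i) (H0 i)) CnX (X1 i) V (Y i CnX))
               + rho i / 2 * (sqnorm n (res (F i) (affmap n (Gm i) (G0 i)) (affmap n (Hm i) (H0 i)) CpX (X1 i) V (Y i CpX))
                              + sqnorm n (res (F i) (affmap n (Gm i) (G0 i)) (affmap n (Hm i) (H0 i)) CnX (X1 i) V (Y i CnX)))
               + tau / 2 * sqnorm n (vdiff V Z0))
     = (\<Sum>i<N. Tc n (rho i) (mu i CpX) (\<lambda>j. X1 i j - V j + Y i CpX j) + Tc n (rho i) (mu i CnX) (\<lambda>j. V j - X1 i j + Y i CnX j))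
       + (\<Sum>i<N. tau / 2 * sqnorm n (vdiff V Z0))" for V
    unfolding sum.distrib[symmetric] by (rule sum.cong) (simp_all add: res_def Tc_def algebra_simps)
  have sqW: "sqnorm n (vdiff (W t) Z0) = (1-t)\<^sup>2 * SZ" for t
  proof -
    have "sqnorm n (vdiff (W t) Z0) = (\<Sum>j<n. (1-t)\<^sup>2 * (vdiff Z1 Z0 j)\<^sup>2)"
      unfolding sqnorm_def
    proof (rule sum.cong)
      fix j show "(vdiff (W t) Z0 j)\<^sup>2 = (1 - t)\<^sup>2 * (vdiff Z1 Z0 j)\<^sup>2"
        unfolding vdiff_def W_def E_def power_mult_distrib[symmetric] by (simp add: algebra_simps)
    qed simp
    then show ?thesis unfolding SZ_def sqnorm_def by (simp add: sum_distrib_left)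
  qed
  have Wc: "(\<lambda>j. (1-t) * Z1 j + t * Z0 j) = W t" for t
    unfolding W_def E_def by (auto simp: algebra_simps)
  have boxc: "in_box n u (\<lambda>j. (1-t) * Z1 j + t * Z0 j)" if "0 \<le> t" "t \<le> 1" for t
    using box0 box1 that unfolding in_box_def by (auto intro!: conv_lb conv_ub)
  have psiV: "psi t = (\<Sum>i<N. Tc n (rho i) (mu i CpX) (\<lambda>j. X1 i j - W t j + Y i CpX j) + Tc n (rho i) (mu i CnX) (\<lambda>j. W t j - X1 i j + Y i CnX j))" for t
    unfolding psi_def RP_def RN_def ..
  have ineq: "psi 0 + 0 + (\<Sum>i<N. tau / 2 * SZ) \<le> psi t + (1-t) * 0 + (1-t)\<^sup>2 * (\<Sum>i<N. tau / 2 * SZ)"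
    if "0 < t" "t \<le> 1" for t
  proof -
    have t0: "0 \<le> t" using that by simp
    have "psi 0 + (\<Sum>i<N. tau / 2 * sqnorm n (vdiff (W 0) Z0)) \<le> psi t + (\<Sum>i<N. tau / 2 * sqnorm n (vdiff (W t) Z0))"
      using minim[rule_format, OF boxc[OF t0 \<open>t \<le> 1\<close>]] unfolding Let_def Wc unfolding W0[symmetric] objeq psiV[symmetric] .
    then show ?thesis unfolding sqW by (simp add: sum_distrib_left algebra_simps)
  qed
  have alow: "0 + 2 * (\<Sum>i<N. tau / 2 * SZ) \<le> (\<Sum>i<N. aT i)"
    by (rule first_order[OF dpsi]) (use ineq in auto)
  have per: "(Tc n (rho i) (mu i CpX) (RP i 1) + Tc n (rho i) (mu i CnX) (RN i 1))
       - (Tc n (rho i) (mu i CpX) (RP i 0) + Tc n (rho i) (mu i CnX) (RN i 0)) = aT i + rho i * SZ" for i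
  proof -
    have i1: "Tc n (rho i) (mu i CpX) (RP i 1) - Tc n (rho i) (mu i CpX) (RP i 0) = inner_d n (mu i CpX) (\<lambda>j. - E j) + rho i * inner_d n (RP i 0) (\<lambda>j. - E j)
     + inner_d n (\<lambda>j. mu i CpX j + rho i * RP i 0 j) (\<lambda>j. RP i 1 j - RP i 0 j - - E j) + rho i/2 * sqnorm n (\<lambda>j. RP i 1 j - RP i 0 j)"
      by (rule Tc_id)
    have i2: "Tc n (rho i) (mu i CnX) (RN i 1) - Tc n (rho i) (mu i CnX) (RN i 0) = inner_d n (mu i CnX) E + rho i * inner_d n (RN i 0) E
     + inner_d n (\<lambda>j. mu i CnX j + rho i * RN i 0 j) (\<lambda>j. RN i 1 j - RN i 0 j - E j) + rho i/2 * sqnorm n (\<lambda>j. RN i 1 j - RN i 0 j)"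
      by (rule Tc_id)
    have z1: "inner_d n (\<lambda>j. mu i CpX j + rho i * RP i 0 j) (\<lambda>j. RP i 1 j - RP i 0 j - - E j) = 0"
      by (rule inner_zero) (simp add: RP_def W_def)
    have z2: "inner_d n (\<lambda>j. mu i CnX j + rho i * RN i 0 j) (\<lambda>j. RN i 1 j - RN i 0 j - E j) = 0"
      by (rule inner_zero) (simp add: RN_def W_def)
    have s1: "sqnorm n (\<lambda>j. RP i 1 j - RP i 0 j) = SZ" unfolding SZ_def
      by (rule sqnorm_cong_sq) (simp add: RP_def W_def E_def vdiff_def power2_commute)
    have s2: "sqnorm n (\<lambda>j. RN i 1 j - RN i 0 j) = SZ" unfolding SZ_def
      by (rule sqnorm_cong_sq) (simp add: RN_def W_def E_def vdiff_def power2_commute)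
    show ?thesis using i1 i2 unfolding z1 z2 s1 s2 aT_def by (simp add: algebra_simps)
  qed
  have psid: "psi 1 - psi 0 = (\<Sum>i<N. aT i) + (\<Sum>i<N. rho i * SZ)"
  proof -
    have "psi 1 - psi 0 = (\<Sum>i<N. (Tc n (rho i) (mu i CpX) (RP i 1) + Tc n (rho i) (mu i CnX) (RN i 1))
       - (Tc n (rho i) (mu i CpX) (RP i 0) + Tc n (rho i) (mu i CnX) (RN i 0)))"
      unfolding psi_def sum_subtractf ..
    also have "\<dots> = (\<Sum>i<N. aT i + rho i * SZ)" unfolding per ..
    finally show ?thesis by (simp add: sum.distrib)
  qed
  have lagd: "Lag n (p i) (q i) (s i) f0 (F i) (affmap n (Gm i) (G0 i)) (affmap n (Hm i) (H0 i)) (rho i) (X1 i) Z0 (Y i) (mu i)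
     - Lag n (p i) (q i) (s i) f0 (F i) (affmap n (Gm i) (G0 i)) (affmap n (Hm i) (H0 i)) (rho i) (X1 i) Z1 (Y i) (mu i)
     = (Tc n (rho i) (mu i CpX) (RP i 1) + Tc n (rho i) (mu i CnX) (RN i 1))
       - (Tc n (rho i) (mu i CpX) (RP i 0) + Tc n (rho i) (mu i CnX) (RN i 0))" for i
    unfolding Lag_expand RP_def RN_def W1 W0 by simp
  have "(\<Sum>i<N. Lag n (p i) (q i) (s i) f0 (F i) (affmap n (Gm i) (G0 i)) (affmap n (Hm i) (H0 i)) (rho i) (X1 i) Z0 (Y i) (mu i))
       - (\<Sum>i<N. Lag n (p i) (q i) (s i) f0 (F i) (affmap n (Gm i) (G0 i)) (affmap n (Hm i) (H0 i)) (rho i) (X1 i) Z1 (Y i) (mu i))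
      = psi 1 - psi 0"
    unfolding sum_subtractf[symmetric] lagd psi_def ..
  also have "\<dots> \<ge> (\<Sum>i<N. (tau + rho i) * SZ)"
    using alow unfolding psid by (simp add: sum.distrib algebra_simps)
  finally show ?thesis unfolding SZ_def .
qed

lemma y1:
  fixes b Y0 Y1 m ub :: vec and g rho :: real
  assumes box0: "in_pbox d ub Y0" and box1: "in_pbox d ub Y1"
    and minim: "\<forall>W. in_pbox d ub W \<longrightarrow> Tc d rho m (\<lambda>j. b j + Y1 j) + g/2 * sqnorm d (vdiff Y1 Y0)
                 \<le> Tc d rho m (\<lambda>j. b j + W j) + g/2 * sqnorm d (vdiff W Y0)"
  shows "Tc d rho m (\<lambda>j. b j + Y0 j) - Tc d rho m (\<lambda>j. b j + Y1 j) \<ge> (g + rho/2) * sqnorm d (vdiff Y1 Y0)"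
proof -
  define E where "E = (\<lambda>j. Y0 j - Y1 j)"
  define W where "W = (\<lambda>t::real. \<lambda>j. Y1 j + t * E j)"
  define SY where "SY = sqnorm d (vdiff Y1 Y0)"
  define R where "R = (\<lambda>t. \<lambda>j. b j + W t j)"
  have W1: "W 1 = Y0" and W0: "W 0 = Y1" unfolding W_def E_def by auto
  have Wc: "(\<lambda>j. (1-t) * Y1 j + t * Y0 j) = W t" for t
    unfolding W_def E_def by (auto simp: algebra_simps)
  have Wc': "(1-t) * Y1 j + t * Y0 j = W t j" for t j
    unfolding W_def E_def by (auto simp: algebra_simps)
  have boxc: "in_pbox d ub (\<lambda>j. (1-t) * Y1 j + t * Y0 j)" if "0 \<le> t" "t \<le> 1" for t
    using box0 box1 that unfolding in_pbox_def by (auto intro!: conv_lb conv_ub)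
  have sqW: "sqnorm d (vdiff (W t) Y0) = (1-t)\<^sup>2 * SY" for t
  proof -
    have "sqnorm d (vdiff (W t) Y0) = (\<Sum>j<d. (1-t)\<^sup>2 * (vdiff Y1 Y0 j)\<^sup>2)"
      unfolding sqnorm_def
    proof (rule sum.cong)
      fix j show "(vdiff (W t) Y0 j)\<^sup>2 = (1 - t)\<^sup>2 * (vdiff Y1 Y0 j)\<^sup>2"
        unfolding vdiff_def W_def E_def power_mult_distrib[symmetric] by (simp add: algebra_simps)
    qed simp
    then show ?thesis unfolding SY_def sqnorm_def by (simp add: sum_distrib_left)
  qed
  define a where "a = inner_d d m E + rho * inner_d d (R 0) E"
  have dphi: "((\<lambda>t. Tc d rho m (R t)) has_real_derivative a) (at 0)"
    unfolding a_def by (rule Tc_deriv) (auto simp: R_def W_def intro!: derivative_eq_intros)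
  have ineq: "Tc d rho m (R 0) + 0 + g/2 * SY \<le> Tc d rho m (R t) + (1-t) * 0 + (1-t)\<^sup>2 * (g/2 * SY)"
    if "0 < t" "t \<le> 1" for t
  proof -
    have t0: "0 \<le> t" using that by simp
    have "Tc d rho m (\<lambda>j. b j + W 0 j) + g/2 * sqnorm d (vdiff (W 0) Y0)
        \<le> Tc d rho m (\<lambda>j. b j + W t j) + g/2 * sqnorm d (vdiff (W t) Y0)"
      using minim[rule_format, OF boxc[OF t0 \<open>t \<le> 1\<close>]] unfolding Wc Wc' unfolding W0[symmetric] .
    then show ?thesis unfolding sqW R_def by (simp add: algebra_simps)
  qed
  have alow: "0 + 2 * (g/2 * SY) \<le> a"
    by (rule first_order[OF dphi]) (use ineq in auto)
  have i1: "Tc d rho m (R 1) - Tc d rho m (R 0) = inner_d d m E + rho * inner_d d (R 0) E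
     + inner_d d (\<lambda>j. m j + rho * R 0 j) (\<lambda>j. R 1 j - R 0 j - E j) + rho/2 * sqnorm d (\<lambda>j. R 1 j - R 0 j)"
    by (rule Tc_id)
  have z1: "inner_d d (\<lambda>j. m j + rho * R 0 j) (\<lambda>j. R 1 j - R 0 j - E j) = 0"
    by (rule inner_zero) (simp add: R_def W_def)
  have s1: "sqnorm d (\<lambda>j. R 1 j - R 0 j) = SY" unfolding SY_def
    by (rule sqnorm_cong_sq) (simp add: R_def W_def E_def vdiff_def power2_commute)
  have "Tc d rho m (\<lambda>j. b j + Y0 j) - Tc d rho m (\<lambda>j. b j + Y1 j) = Tc d rho m (R 1) - Tc d rho m (R 0)"
    unfolding R_def W1 W0 ..
  also have "\<dots> = a + rho/2 * SY" unfolding i1 z1 s1 a_def by simp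
  finally show ?thesis using alow unfolding SY_def by (simp add: algebra_simps)
qed

lemma res_split: "res Fi Gi Hi c X Z V = (\<lambda>j. res Fi Gi Hi c X Z (\<lambda>_. 0) j + V j)"
  by (cases c) (auto simp: res_def)

lemma ystep:
  fixes n p q s :: nat and rho :: real and X1 Z1 f0 :: vec and Y0 Y1 mu uY :: "cat \<Rightarrow> vec" and gam :: "cat \<Rightarrow> real"
  assumes box0: "\<forall>c\<in>cats. in_pbox (cdim n p q s c) (uY c) (Y0 c)"
    and box1: "\<forall>c\<in>cats. in_pbox (cdim n p q s c) (uY c) (Y1 c)"
    and minim: "\<forall>c\<in>cats. \<forall>W. in_pbox (cdim n p q s c) (uY c) W \<longrightarrow>
          (let obj = (\<lambda>V.
                 inner_d (cdim n p q s c) (mu c) (res Fi Gi Hi c X1 Z1 V)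
               + rho / 2 * sqnorm (cdim n p q s c) (res Fi Gi Hi c X1 Z1 V)
               + gam c / 2 * sqnorm (cdim n p q s c) (vdiff V (Y0 c)))
           in obj (Y1 c) \<le> obj W)"
  shows "Lag n p q s f0 Fi Gi Hi rho X1 Z1 Y0 mu - Lag n p q s f0 Fi Gi Hi rho X1 Z1 Y1 mu
     \<ge> (\<Sum>c\<in>cats. (gam c + rho/2) * sqnorm (cdim n p q s c) (vdiff (Y1 c) (Y0 c)))"
proof -
  have "Lag n p q s f0 Fi Gi Hi rho X1 Z1 Y0 mu - Lag n p q s f0 Fi Gi Hi rho X1 Z1 Y1 mu
     = (\<Sum>c\<in>cats. Tc (cdim n p q s c) rho (mu c) (res Fi Gi Hi c X1 Z1 (Y0 c))
           - Tc (cdim n p q s c) rho (mu c) (res Fi Gi Hi c X1 Z1 (Y1 c)))"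
    unfolding Lag_def Tc_def sum_subtractf by simp
  also have "\<dots> \<ge> (\<Sum>c\<in>cats. (gam c + rho/2) * sqnorm (cdim n p q s c) (vdiff (Y1 c) (Y0 c)))"
  proof (rule sum_mono)
    fix c assume c: "c \<in> cats"
    let ?b = "res Fi Gi Hi c X1 Z1 (\<lambda>_. 0)"
    have "Tc (cdim n p q s c) rho (mu c) (\<lambda>j. ?b j + Y0 c j) - Tc (cdim n p q s c) rho (mu c) (\<lambda>j. ?b j + Y1 c j)
        \<ge> (gam c + rho/2) * sqnorm (cdim n p q s c) (vdiff (Y1 c) (Y0 c))"
    proof (rule y1)
      show "in_pbox (cdim n p q s c) (uY c) (Y0 c)" using box0 c by auto
      show "in_pbox (cdim n p q s c) (uY c) (Y1 c)" using box1 c by auto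
      show "\<forall>W. in_pbox (cdim n p q s c) (uY c) W \<longrightarrow>
          Tc (cdim n p q s c) rho (mu c) (\<lambda>j. ?b j + Y1 c j) + gam c / 2 * sqnorm (cdim n p q s c) (vdiff (Y1 c) (Y0 c))
          \<le> Tc (cdim n p q s c) rho (mu c) (\<lambda>j. ?b j + W j) + gam c / 2 * sqnorm (cdim n p q s c) (vdiff W (Y0 c))"
      proof (intro allI impI)
        fix W assume "in_pbox (cdim n p q s c) (uY c) W"
        with minim c have "let obj = (\<lambda>V.
                 inner_d (cdim n p q s c) (mu c) (res Fi Gi Hi c X1 Z1 V)
               + rho / 2 * sqnorm (cdim n p q s c) (res Fi Gi Hi c X1 Z1 V)
               + gam c / 2 * sqnorm (cdim n p q s c) (vdiff V (Y0 c)))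
           in obj (Y1 c) \<le> obj W" by blast
        then show "Tc (cdim n p q s c) rho (mu c) (\<lambda>j. ?b j + Y1 c j) + gam c / 2 * sqnorm (cdim n p q s c) (vdiff (Y1 c) (Y0 c))
          \<le> Tc (cdim n p q s c) rho (mu c) (\<lambda>j. ?b j + W j) + gam c / 2 * sqnorm (cdim n p q s c) (vdiff W (Y0 c))"
          unfolding Let_def Tc_def res_split[of Fi Gi Hi c X1 Z1 W] res_split[of Fi Gi Hi c X1 Z1 "Y1 c"] by simp
      qed
    qed
    then show "(gam c + rho/2) * sqnorm (cdim n p q s c) (vdiff (Y1 c) (Y0 c))
        \<le> Tc (cdim n p q s c) rho (mu c) (res Fi Gi Hi c X1 Z1 (Y0 c))
           - Tc (cdim n p q s c) rho (mu c) (res Fi Gi Hi c X1 Z1 (Y1 c))"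
      using res_split[of Fi Gi Hi c X1 Z1 "Y0 c"] res_split[of Fi Gi Hi c X1 Z1 "Y1 c"] by simp
  qed
  finally show ?thesis .
qed

lemma quad_cong:
  assumes "quad_comp n g" "\<forall>j<n. V j = V' j"
  shows "g V = g V'"
proof -
  have aff: "a V = a V'" if "affine_fn n a" for a
  proof -
    from that obtain w w0 where "\<forall>Z. a Z = (\<Sum>j<n. w j * Z j) + w0" unfolding affine_fn_def by blast
    then show ?thesis using assms(2) by simp
  qed
  from assms(1) obtain a b c where "affine_fn n a" "affine_fn n b" "affine_fn n c"
    "(\<forall>Z. g Z = a Z + (c Z)\<^sup>2) \<or> (\<forall>Z. g Z = (c Z)\<^sup>2 - a Z * b Z)"
    unfolding quad_comp_def by blast
  moreover from this have "a V = a V'" "b V = b V'" "c V = c V'" using aff by auto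
  ultimately show ?thesis by auto
qed

lemma Tc_cong: "(\<And>j. j<d \<Longrightarrow> R j = R' j) \<Longrightarrow> Tc d rho m R = Tc d rho m R'"
  unfolding Tc_def inner_d_def sqnorm_def by simp

lemma Lag_cong:
  assumes quad: "\<forall>t<p. quad_comp n (\<lambda>V. Fi V t)" and eq: "\<forall>j<n. V j = V' j"
  shows "Lag n p q s f0 Fi (affmap n Gm G0) (affmap n Hm H0) rho V Z Y mu
       = Lag n p q s f0 Fi (affmap n Gm G0) (affmap n Hm H0) rho V' Z Y mu"
proof -
  have f: "Fi V t = Fi V' t" if "t < p" for t
    using quad_cong[of n "\<lambda>V. Fi V t" V V'] quad eq that by auto
  have g: "affmap n A b V r = affmap n A b V' r" for A b r
    unfolding affmap_def using eq by simp
  have i: "inner_d n f0 V = inner_d n f0 V'" unfolding inner_d_def using eq by simp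
  show ?thesis unfolding Lag_expand i
    by (intro arg_cong2[where f="(+)"] Tc_cong refl) (simp_all add: eq f g)
qed

lemma partition_sum:
  assumes "\<forall>j<n. blk j < M"
  shows "(\<Sum>l<M. \<Sum>j\<in>blk_set n blk l. f j) = (\<Sum>j<n. (f j :: real))"
proof -
  have "(\<Sum>l\<in>{..<M}. sum f {x \<in> {..<n}. blk x = l}) = sum f {..<n}"
    by (rule sum.group) (use assms in auto)
  moreover have "{x \<in> {..<n}. blk x = l} = blk_set n blk l" for l unfolding blk_set_def by auto
  ultimately show ?thesis by simp
qed

lemma xsweep:
  fixes n p q s M :: nat and rho :: real and blk :: "nat \<Rightarrow> nat" and Fi :: "vec \<Rightarrow> vec"
    and Gm Hm :: "nat \<Rightarrow> nat \<Rightarrow> real" and G0 H0 f0 X0 X1 Z u :: vec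
    and Y mu :: "cat \<Rightarrow> vec" and sig1 sig2 :: "nat \<Rightarrow> real"
  assumes quad: "\<forall>t<p. quad_comp n (\<lambda>V. Fi V t)"
    and blk_part: "\<forall>j<n. blk j < M"
    and box0: "in_box n u X0"
    and U1: "\<forall>l<M. in_block_box n u blk l X1 \<and>
       (\<forall>W. in_block_box n u blk l W \<longrightarrow>
        (let obj = (\<lambda>V. Lag n p q s f0 Fi (affmap n Gm G0) (affmap n Hm H0) rho V Z Y mu
                 + sig1 l * (\<Sum>j\<in>blk_set n blk l. \<bar>V j - X0 j\<bar>)
                 + sig2 l / 2 * (\<Sum>j\<in>blk_set n blk l. (V j - X0 j)\<^sup>2))
         in obj (GS blk X0 X1 (Suc l)) \<le> obj (\<lambda>j. if blk j = l then W j else GS blk X0 X1 l j)))"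
  shows "Lag n p q s f0 Fi (affmap n Gm G0) (affmap n Hm H0) rho X0 Z Y mu
       - Lag n p q s f0 Fi (affmap n Gm G0) (affmap n Hm H0) rho X1 Z Y mu \<ge>
     (\<Sum>l<M. sig1 l * (\<Sum>j\<in>blk_set n blk l. \<bar>X0 j - X1 j\<bar>)
        + inner_d p (\<lambda>t. mu CF t + rho * (Fi (GS blk X0 X1 (Suc l)) t + Y CF t))
         (\<lambda>t. Fi (GS blk X0 X1 l) t - Fi (GS blk X0 X1 (Suc l)) t
             - (\<Sum>j\<in>blk_set n blk l. (X0 j - X1 j) * partial_d (\<lambda>V. Fi V t) (GS blk X0 X1 (Suc l)) j)))
     + ((\<Sum>l<M. sig2 l * (\<Sum>j\<in>blk_set n blk l. (X1 j - X0 j)\<^sup>2))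
     + rho * sqnorm n (vdiff X1 X0)
     + rho/2 * (\<Sum>l<M. sqnorm p (vdiff (Fi (GS blk X0 X1 (Suc l))) (Fi (GS blk X0 X1 l)))
                + sqnorm q (blkmap n blk l Gm (vdiff X1 X0))
                + 2 * sqnorm s (blkmap n blk l Hm (vdiff X1 X0))))"
proof -
  define Lg where "Lg = (\<lambda>V. Lag n p q s f0 Fi (affmap n Gm G0) (affmap n Hm H0) rho V Z Y mu)"
  define g where "g = (\<lambda>l. sig1 l * (\<Sum>j\<in>blk_set n blk l. \<bar>X0 j - X1 j\<bar>) + sig2 l * (\<Sum>j\<in>blk_set n blk l. (X1 j - X0 j)\<^sup>2)
     + rho * (\<Sum>j\<in>blk_set n blk l. (X1 j - X0 j)\<^sup>2)
     + inner_d p (\<lambda>t. mu CF t + rho * (Fi (GS blk X0 X1 (Suc l)) t + Y CF t))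
         (\<lambda>t. Fi (GS blk X0 X1 l) t - Fi (GS blk X0 X1 (Suc l)) t
             - (\<Sum>j\<in>blk_set n blk l. (X0 j - X1 j) * partial_d (\<lambda>V. Fi V t) (GS blk X0 X1 (Suc l)) j))
     + rho/2 * (sqnorm p (vdiff (Fi (GS blk X0 X1 (Suc l))) (Fi (GS blk X0 X1 l))) + sqnorm q (blkmap n blk l Gm (vdiff X1 X0))
                + 2 * sqnorm s (blkmap n blk l Hm (vdiff X1 X0))))"
  have each: "Lg (GS blk X0 X1 l) - Lg (GS blk X0 X1 (Suc l)) \<ge> g l" if l: "l < M" for l
    unfolding Lg_def g_def
    by (rule xstep[OF quad box0]) (use U1 l in auto)
  have G0e: "GS blk X0 X1 0 = X0" unfolding GS_def by simp
  have GMe: "Lg (GS blk X0 X1 M) = Lg X1" unfolding Lg_def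
    by (rule Lag_cong[OF quad]) (use blk_part in \<open>auto simp: GS_def\<close>)
  have "Lg X0 - Lg X1 = (\<Sum>l<M. Lg (GS blk X0 X1 l) - Lg (GS blk X0 X1 (Suc l)))"
    using sum_lessThan_telescope'[of "\<lambda>l. Lg (GS blk X0 X1 l)" M] G0e GMe by simp
  also have "\<dots> \<ge> (\<Sum>l<M. g l)" by (rule sum_mono) (use each in auto)
  finally have "Lg X0 - Lg X1 \<ge> (\<Sum>l<M. g l)" .
  moreover have "(\<Sum>l<M. rho * (\<Sum>j\<in>blk_set n blk l. (X1 j - X0 j)\<^sup>2)) = rho * sqnorm n (vdiff X1 X0)"
    unfolding sum_distrib_left[symmetric] partition_sum[OF blk_part] sqnorm_def vdiff_def ..
  moreover
  define a1 where "a1 = (\<lambda>l. sig1 l * (\<Sum>j\<in>blk_set n blk l. \<bar>X0 j - X1 j\<bar>)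
        + inner_d p (\<lambda>t. mu CF t + rho * (Fi (GS blk X0 X1 (Suc l)) t + Y CF t))
         (\<lambda>t. Fi (GS blk X0 X1 l) t - Fi (GS blk X0 X1 (Suc l)) t
             - (\<Sum>j\<in>blk_set n blk l. (X0 j - X1 j) * partial_d (\<lambda>V. Fi V t) (GS blk X0 X1 (Suc l)) j)))"
  define a2 where "a2 = (\<lambda>l. sig2 l * (\<Sum>j\<in>blk_set n blk l. (X1 j - X0 j)\<^sup>2))"
  define a3 where "a3 = (\<lambda>l. rho * (\<Sum>j\<in>blk_set n blk l. (X1 j - X0 j)\<^sup>2))"
  define a4 where "a4 = (\<lambda>l. sqnorm p (vdiff (Fi (GS blk X0 X1 (Suc l))) (Fi (GS blk X0 X1 l)))
                + sqnorm q (blkmap n blk l Gm (vdiff X1 X0))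
                + 2 * sqnorm s (blkmap n blk l Hm (vdiff X1 X0)))"
  have "g l = a1 l + a2 l + a3 l + rho/2 * a4 l" for l
    unfolding g_def a1_def a2_def a3_def a4_def by (simp add: algebra_simps)
  then have "(\<Sum>l<M. g l) = (\<Sum>l<M. a1 l) + (\<Sum>l<M. a2 l) + (\<Sum>l<M. a3 l) + rho/2 * (\<Sum>l<M. a4 l)"
    by (simp add: sum.distrib sum_distrib_left)
  ultimately show ?thesis unfolding Lg_def a1_def[symmetric] a2_def[symmetric] a4_def[symmetric]
    by (simp add: a3_def)
qed

lemma dual:
  assumes "\<forall>c\<in>cats. \<forall>j<cdim n p q s c. mu1 c j = mu0 c j - al c j * res Fi Gi Hi c X Z (Y c) j"
  shows "Lag n p q s f0 Fi Gi Hi rho X Z Y mu0 = Lag n p q s f0 Fi Gi Hi rho X Z Y mu1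
     + (\<Sum>c\<in>cats. \<Sum>j<cdim n p q s c. al c j * \<bar>res Fi Gi Hi c X Z (Y c) j\<bar>\<^sup>2)"
proof -
  let ?A = "\<lambda>mu c. inner_d (cdim n p q s c) (mu c) (res Fi Gi Hi c X Z (Y c))"
  let ?B = "\<lambda>c. rho / 2 * sqnorm (cdim n p q s c) (res Fi Gi Hi c X Z (Y c))"
  have "(\<Sum>c\<in>cats. ?A mu0 c + ?B c) = (\<Sum>c\<in>cats. ?A mu1 c + ?B c) + (\<Sum>c\<in>cats. ?A mu0 c - ?A mu1 c)"
    unfolding sum.distrib[symmetric] by (rule sum.cong) simp_all
  then have "Lag n p q s f0 Fi Gi Hi rho X Z Y mu0 - Lag n p q s f0 Fi Gi Hi rho X Z Y mu1
     = (\<Sum>c\<in>cats. ?A mu0 c - ?A mu1 c)"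
    unfolding Lag_def by simp
  also have "\<dots> = (\<Sum>c\<in>cats. \<Sum>j<cdim n p q s c. (mu0 c j - mu1 c j) * res Fi Gi Hi c X Z (Y c) j)"
    unfolding inner_d_def sum_subtractf[symmetric] by (simp add: algebra_simps)
  also have "\<dots> = (\<Sum>c\<in>cats. \<Sum>j<cdim n p q s c. al c j * \<bar>res Fi Gi Hi c X Z (Y c) j\<bar>\<^sup>2)"
    by (intro sum.cong refl) (simp add: assms power2_eq_square)
  finally show ?thesis by simp
qed

theorem lemma2:
  fixes n N M K :: nat
    and u f0 :: vec
    and blk :: "nat \<Rightarrow> nat"
    and p q s :: "nat \<Rightarrow> nat"
    and F :: "nat \<Rightarrow> vec \<Rightarrow> vec"
    and Gm Hm :: "nat \<Rightarrow> nat \<Rightarrow> nat \<Rightarrow> real"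
    and G0 H0 :: "nat \<Rightarrow> vec"
    and rho :: "nat \<Rightarrow> real"
    and uY uMu :: "nat \<Rightarrow> cat \<Rightarrow> vec"
    and \<alpha> :: "nat \<Rightarrow> cat \<Rightarrow> real"
    and sig1 sig2 :: "nat \<Rightarrow> nat \<Rightarrow> nat \<Rightarrow> real"
    and tau :: "nat \<Rightarrow> real"
    and gam :: "nat \<Rightarrow> nat \<Rightarrow> cat \<Rightarrow> real"
    and X :: "nat \<Rightarrow> nat \<Rightarrow> vec"
    and Z :: "nat \<Rightarrow> vec"
    and Y mu :: "nat \<Rightarrow> nat \<Rightarrow> cat \<Rightarrow> vec"
  defines "d \<equiv> \<lambda>i c. cdim n (p i) (q i) (s i) c"
    and "r \<equiv> \<lambda>k i c. res (F i) (affmap n (Gm i) (G0 i)) (affmap n (Hm i) (H0 i)) c (X k i) (Z k) (Y k i c)"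
    and "L \<equiv> \<lambda>k. \<Sum>i<N. Lag n (p i) (q i) (s i) f0 (F i) (affmap n (Gm i) (G0 i)) (affmap n (Hm i) (H0 i)) (rho i)
                           (X k i) (Z k) (Y k i) (mu k i)"
    and "XGS \<equiv> \<lambda>k i l. GS blk (X k i) (X (Suc k) i) l"
  assumes u_pos: "\<forall>j<n. u j > 0"
    and blk_part: "\<forall>j<n. blk j < M"
    and F_quad: "\<forall>i<N. \<forall>j<p i. quad_comp n (\<lambda>V. F i V j)"
    and F_convex: "\<forall>i<N. \<forall>j<p i. convex_on_box n u (\<lambda>V. F i V j)"
    and rho_pos: "\<forall>i<N. rho i > 0"
    and uY_pos: "\<forall>i<N. \<forall>c\<in>cats. \<forall>j<d i c. uY i c j > 0"
    and uMu_pos: "\<forall>i<N. \<forall>c\<in>cats. \<forall>j<d i c. uMu i c j > 0"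
    and alpha_pos: "\<forall>i<N. \<forall>c\<in>cats. \<alpha> i c > 0"
    and sig1_nonneg: "\<forall>k. \<forall>i<N. \<forall>l<M. sig1 k i l \<ge> 0"
    and sig2_pos: "\<forall>k. \<forall>i<N. \<forall>l<M. sig2 k i l > 0"
    and tau_pos: "\<forall>k. tau k > 0"
    and gam_pos: "\<forall>k. \<forall>i<N. \<forall>c\<in>cats. gam k i c > 0"
    and X0: "\<forall>i<N. in_box n u (X 0 i)"
    and Z0: "in_box n u (Z 0)"
    and Y0: "\<forall>i<N. \<forall>c\<in>cats. in_pbox (d i c) (uY i c) (Y 0 i c)"
    and mu0: "\<forall>i<N. \<forall>c\<in>cats. in_pbox (d i c) (uMu i c) (mu 0 i c)"
    and U1: "\<forall>k. \<forall>i<N. \<forall>l<M.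
       in_block_box n u blk l (X (Suc k) i) \<and>
       (\<forall>W. in_block_box n u blk l W \<longrightarrow>
          (let obj = (\<lambda>V. Lag n (p i) (q i) (s i) f0 (F i) (affmap n (Gm i) (G0 i)) (affmap n (Hm i) (H0 i)) (rho i) V (Z k) (Y k i) (mu k i)
                     + sig1 k i l * (\<Sum>j\<in>blk_set n blk l. \<bar>V j - X k i j\<bar>)
                     + sig2 k i l / 2 * (\<Sum>j\<in>blk_set n blk l. (V j - X k i j)\<^sup>2))
           in obj (XGS k i (Suc l))
              \<le> obj (\<lambda>j. if blk j = l then W j else XGS k i l j)))"
    and U2: "\<forall>k. in_box n u (Z (Suc k)) \<and>
       (\<forall>W. in_box n u W \<longrightarrow>
          (let obj = (\<lambda>V. \<Sum>i<N.
                 inner_d n (mu k i CpX) (res (F i) (affmap n (Gm i) (G0 i)) (affmap n (Hm i) (H0 i)) CpX (X (Suc k) i) V (Y k i CpX))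
               + inner_d n (mu k i CnX) (res (F i) (affmap n (Gm i) (G0 i)) (affmap n (Hm i) (H0 i)) CnX (X (Suc k) i) V (Y k i CnX))
               + rho i / 2 * (sqnorm n (res (F i) (affmap n (Gm i) (G0 i)) (affmap n (Hm i) (H0 i)) CpX (X (Suc k) i) V (Y k i CpX))
                              + sqnorm n (res (F i) (affmap n (Gm i) (G0 i)) (affmap n (Hm i) (H0 i)) CnX (X (Suc k) i) V (Y k i CnX)))
               + tau k / 2 * sqnorm n (vdiff V (Z k)))
           in obj (Z (Suc k)) \<le> obj W))"
    and U3: "\<forall>k. \<forall>i<N. \<forall>c\<in>cats.
       in_pbox (d i c) (uY i c) (Y (Suc k) i c) \<and>
       (\<forall>W. in_pbox (d i c) (uY i c) W \<longrightarrow>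
          (let obj = (\<lambda>V.
                 inner_d (d i c) (mu k i c) (res (F i) (affmap n (Gm i) (G0 i)) (affmap n (Hm i) (H0 i)) c (X (Suc k) i) (Z (Suc k)) V)
               + rho i / 2 * sqnorm (d i c) (res (F i) (affmap n (Gm i) (G0 i)) (affmap n (Hm i) (H0 i)) c (X (Suc k) i) (Z (Suc k)) V)
               + gam k i c / 2 * sqnorm (d i c) (vdiff V (Y k i c)))
           in obj (Y (Suc k) i c) \<le> obj W))"
    and D: "\<forall>k. \<forall>i<N. \<forall>c\<in>cats. \<forall>j<d i c.
       mu (Suc k) i c j = mu k i c j
         - alphaD (\<alpha> i c) (uMu i c j) (mu k i c j) (r (Suc k) i c j) * r (Suc k) i c j"
  shows "L 0 \<ge> L K
     + (\<Sum>i<N. \<Sum>k\<in>{1..K}. \<Sum>c\<in>cats. \<Sum>j<d i c.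
          alphaD (\<alpha> i c) (uMu i c j) (mu (k - 1) i c j) (r k i c j) * \<bar>r k i c j\<bar>\<^sup>2)
     + (\<Sum>k<K. \<Sum>i<N.
          (\<Sum>l<M. sig2 k i l * (\<Sum>j\<in>blk_set n blk l. (X (Suc k) i j - X k i j)\<^sup>2))
        + rho i * sqnorm n (vdiff (X (Suc k) i) (X k i))
        + (tau k + rho i) * sqnorm n (vdiff (Z (Suc k)) (Z k))
        + (\<Sum>c\<in>cats. (gam k i c + rho i / 2) * sqnorm (d i c) (vdiff (Y (Suc k) i c) (Y k i c)))
        + rho i / 2 * (\<Sum>l<M.
              sqnorm (p i) (vdiff (F i (XGS k i (Suc l))) (F i (XGS k i l)))
            + sqnorm (q i) (blkmap n blk l (Gm i) (vdiff (X (Suc k) i) (X k i)))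
            + 2 * sqnorm (s i) (blkmap n blk l (Hm i) (vdiff (X (Suc k) i) (X k i)))))
     + (\<Sum>i<N. \<Sum>k<K. \<Sum>l<M.
          sig1 k i l * (\<Sum>j\<in>blk_set n blk l. \<bar>X k i j - X (Suc k) i j\<bar>)
        + inner_d (p i)
            (\<lambda>t. mu k i CF t + rho i * (F i (XGS k i (Suc l)) t + Y k i CF t))
            (\<lambda>t. F i (XGS k i l) t - F i (XGS k i (Suc l)) t
                 - (\<Sum>j\<in>blk_set n blk l. (X k i j - X (Suc k) i j)
                       * partial_d (\<lambda>V. F i V t) (XGS k i (Suc l)) j)))"
proof -
  have boxX: "in_box n u (X k i)" if "i<N" for k i
  proof (cases k)
    case 0 then show ?thesis using X0 that by auto
  next
    case (Suc k')
    show ?thesis unfolding in_box_def Suc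
    proof (intro allI impI)
      fix j assume j: "j<n"
      then have "blk j < M" using blk_part by auto
      then have "in_block_box n u blk (blk j) (X (Suc k') i)" using U1 that by blast
      then show "- u j \<le> X (Suc k') i j \<and> X (Suc k') i j \<le> u j" using j unfolding in_block_box_def blk_set_def by auto
    qed
  qed
  have boxZ: "in_box n u (Z k)" for k by (cases k) (use Z0 U2 in auto)
  have boxY: "in_pbox (d i c) (uY i c) (Y k i c)" if "i<N" "c\<in>cats" for k i c
    by (cases k) (use Y0 U3 that in auto)
  define SX where "SX = (\<lambda>k i. \<Sum>l<M. sig2 k i l * (\<Sum>j\<in>blk_set n blk l. (X (Suc k) i j - X k i j)\<^sup>2))"
  define RX where "RX = (\<lambda>k i. rho i * sqnorm n (vdiff (X (Suc k) i) (X k i)))"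
  define ZZ where "ZZ = (\<lambda>k i. (tau k + rho i) * sqnorm n (vdiff (Z (Suc k)) (Z k)))"
  define YY where "YY = (\<lambda>k i. \<Sum>c\<in>cats. (gam k i c + rho i / 2) * sqnorm (d i c) (vdiff (Y (Suc k) i c) (Y k i c)))"
  define FF where "FF = (\<lambda>k i. rho i / 2 * (\<Sum>l<M.
              sqnorm (p i) (vdiff (F i (XGS k i (Suc l))) (F i (XGS k i l)))
            + sqnorm (q i) (blkmap n blk l (Gm i) (vdiff (X (Suc k) i) (X k i)))
            + 2 * sqnorm (s i) (blkmap n blk l (Hm i) (vdiff (X (Suc k) i) (X k i)))))"
  define QQ where "QQ = (\<lambda>k i. \<Sum>l<M.
          sig1 k i l * (\<Sum>j\<in>blk_set n blk l. \<bar>X k i j - X (Suc k) i j\<bar>)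
        + inner_d (p i)
            (\<lambda>t. mu k i CF t + rho i * (F i (XGS k i (Suc l)) t + Y k i CF t))
            (\<lambda>t. F i (XGS k i l) t - F i (XGS k i (Suc l)) t
                 - (\<Sum>j\<in>blk_set n blk l. (X k i j - X (Suc k) i j)
                       * partial_d (\<lambda>V. F i V t) (XGS k i (Suc l)) j)))"
  define AA where "AA = (\<lambda>k i. \<Sum>c\<in>cats. \<Sum>j<d i c.
          alphaD (\<alpha> i c) (uMu i c j) (mu (k - 1) i c j) (r k i c j) * \<bar>r k i c j\<bar>\<^sup>2)"
  define Lg where "Lg = (\<lambda>i Xv Zv Yv muv. Lag n (p i) (q i) (s i) f0 (F i) (affmap n (Gm i) (G0 i)) (affmap n (Hm i) (H0 i)) (rho i) Xv Zv Yv muv)"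
  have step: "L k \<ge> L (Suc k) + (\<Sum>i<N. AA (Suc k) i) + (\<Sum>i<N. SX k i + RX k i + ZZ k i + YY k i + FF k i) + (\<Sum>i<N. QQ k i)" for k
  proof -
    have hX: "Lg i (X k i) (Z k) (Y k i) (mu k i) - Lg i (X (Suc k) i) (Z k) (Y k i) (mu k i)
        \<ge> QQ k i + (SX k i + RX k i + FF k i)" if i: "i<N" for i
      unfolding Lg_def QQ_def SX_def RX_def FF_def XGS_def
    proof (rule xsweep)
      show "\<forall>t<p i. quad_comp n (\<lambda>V. F i V t)" using F_quad i by blast
      show "\<forall>j<n. blk j < M" by (rule blk_part)
      show "in_box n u (X k i)" by (rule boxX[OF i])
      show "\<forall>l<M. in_block_box n u blk l (X (Suc k) i) \<and>
       (\<forall>W. in_block_box n u blk l W \<longrightarrow>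
        (let obj = (\<lambda>V. Lag n (p i) (q i) (s i) f0 (F i) (affmap n (Gm i) (G0 i)) (affmap n (Hm i) (H0 i)) (rho i) V (Z k) (Y k i) (mu k i)
                 + sig1 k i l * (\<Sum>j\<in>blk_set n blk l. \<bar>V j - X k i j\<bar>)
                 + sig2 k i l / 2 * (\<Sum>j\<in>blk_set n blk l. (V j - X k i j)\<^sup>2))
         in obj (GS blk (X k i) (X (Suc k) i) (Suc l)) \<le> obj (\<lambda>j. if blk j = l then W j else GS blk (X k i) (X (Suc k) i) l j)))"
        using U1 i unfolding XGS_def by blast
    qed
    have hZ: "(\<Sum>i<N. Lg i (X (Suc k) i) (Z k) (Y k i) (mu k i)) - (\<Sum>i<N. Lg i (X (Suc k) i) (Z (Suc k)) (Y k i) (mu k i))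
        \<ge> (\<Sum>i<N. ZZ k i)"
      unfolding Lg_def ZZ_def
      by (rule zstep[OF boxZ boxZ]) (use U2 in blast)
    have hY: "Lg i (X (Suc k) i) (Z (Suc k)) (Y k i) (mu k i) - Lg i (X (Suc k) i) (Z (Suc k)) (Y (Suc k) i) (mu k i)
        \<ge> YY k i" if i: "i<N" for i
      unfolding Lg_def YY_def d_def
    proof (rule ystep)
      show "\<forall>c\<in>cats. in_pbox (cdim n (p i) (q i) (s i) c) (uY i c) (Y k i c)" using boxY i unfolding d_def by blast
      show "\<forall>c\<in>cats. in_pbox (cdim n (p i) (q i) (s i) c) (uY i c) (Y (Suc k) i c)" using boxY i unfolding d_def by blast
      show "\<forall>c\<in>cats. \<forall>W. in_pbox (cdim n (p i) (q i) (s i) c) (uY i c) W \<longrightarrow>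
          (let obj = (\<lambda>V.
                 inner_d (cdim n (p i) (q i) (s i) c) (mu k i c) (res (F i) (affmap n (Gm i) (G0 i)) (affmap n (Hm i) (H0 i)) c (X (Suc k) i) (Z (Suc k)) V)
               + rho i / 2 * sqnorm (cdim n (p i) (q i) (s i) c) (res (F i) (affmap n (Gm i) (G0 i)) (affmap n (Hm i) (H0 i)) c (X (Suc k) i) (Z (Suc k)) V)
               + gam k i c / 2 * sqnorm (cdim n (p i) (q i) (s i) c) (vdiff V (Y k i c)))
           in obj (Y (Suc k) i c) \<le> obj W)"
        using U3 i unfolding d_def by blast
    qed
    have hD: "Lg i (X (Suc k) i) (Z (Suc k)) (Y (Suc k) i) (mu k i) = Lg i (X (Suc k) i) (Z (Suc k)) (Y (Suc k) i) (mu (Suc k) i)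
        + AA (Suc k) i" if i: "i<N" for i
      unfolding Lg_def AA_def d_def r_def diff_Suc_1
      by (rule dual) (use D i in \<open>auto simp: d_def r_def\<close>)
    have s1: "(\<Sum>i<N. Lg i (X k i) (Z k) (Y k i) (mu k i)) - (\<Sum>i<N. Lg i (X (Suc k) i) (Z k) (Y k i) (mu k i))
        \<ge> (\<Sum>i<N. QQ k i) + (\<Sum>i<N. SX k i) + (\<Sum>i<N. RX k i) + (\<Sum>i<N. FF k i)"
    proof -
      have "(\<Sum>i<N. QQ k i + (SX k i + RX k i + FF k i)) \<le> (\<Sum>i<N. Lg i (X k i) (Z k) (Y k i) (mu k i) - Lg i (X (Suc k) i) (Z k) (Y k i) (mu k i))"
        by (rule sum_mono) (use hX in auto)
      then show ?thesis by (simp add: sum.distrib sum_subtractf)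
    qed
    have s3: "(\<Sum>i<N. Lg i (X (Suc k) i) (Z (Suc k)) (Y k i) (mu k i)) - (\<Sum>i<N. Lg i (X (Suc k) i) (Z (Suc k)) (Y (Suc k) i) (mu k i))
        \<ge> (\<Sum>i<N. YY k i)"
    proof -
      have "(\<Sum>i<N. YY k i) \<le> (\<Sum>i<N. Lg i (X (Suc k) i) (Z (Suc k)) (Y k i) (mu k i) - Lg i (X (Suc k) i) (Z (Suc k)) (Y (Suc k) i) (mu k i))"
        by (rule sum_mono) (use hY in auto)
      then show ?thesis by (simp add: sum_subtractf)
    qed
    have s4: "(\<Sum>i<N. Lg i (X (Suc k) i) (Z (Suc k)) (Y (Suc k) i) (mu k i)) = (\<Sum>i<N. Lg i (X (Suc k) i) (Z (Suc k)) (Y (Suc k) i) (mu (Suc k) i)) + (\<Sum>i<N. AA (Suc k) i)"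
      using hD by (simp add: sum.distrib)
    have Lk: "L k = (\<Sum>i<N. Lg i (X k i) (Z k) (Y k i) (mu k i))" unfolding L_def Lg_def ..
    have LSk: "L (Suc k) = (\<Sum>i<N. Lg i (X (Suc k) i) (Z (Suc k)) (Y (Suc k) i) (mu (Suc k) i))" unfolding L_def Lg_def ..
    have "(\<Sum>i<N. SX k i + RX k i + ZZ k i + YY k i + FF k i) = (\<Sum>i<N. SX k i) + (\<Sum>i<N. RX k i) + (\<Sum>i<N. ZZ k i) + (\<Sum>i<N. YY k i) + (\<Sum>i<N. FF k i)"
      by (simp add: sum.distrib)
    then show ?thesis using s1 hZ s3 s4 unfolding Lk LSk by linarith
  qed
  have main: "L 0 \<ge> L K' + (\<Sum>k\<in>{1..K'}. \<Sum>i<N. AA k i) + (\<Sum>k<K'. \<Sum>i<N. SX k i + RX k i + ZZ k i + YY k i + FF k i) + (\<Sum>k<K'. \<Sum>i<N. QQ k i)" for K'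
  proof (induction K')
    case 0 then show ?case by simp
  next
    case (Suc K') then show ?case using step[of K'] by simp
  qed
  have eqA: "(\<Sum>i<N. \<Sum>k\<in>{1..K}. \<Sum>c\<in>cats. \<Sum>j<d i c.
          alphaD (\<alpha> i c) (uMu i c j) (mu (k - 1) i c j) (r k i c j) * \<bar>r k i c j\<bar>\<^sup>2) = (\<Sum>k\<in>{1..K}. \<Sum>i<N. AA k i)"
    unfolding AA_def by (rule sum.swap)
  have eqQ: "(\<Sum>i<N. \<Sum>k<K. \<Sum>l<M.
          sig1 k i l * (\<Sum>j\<in>blk_set n blk l. \<bar>X k i j - X (Suc k) i j\<bar>)
        + inner_d (p i)
            (\<lambda>t. mu k i CF t + rho i * (F i (XGS k i (Suc l)) t + Y k i CF t))
            (\<lambda>t. F i (XGS k i l) t - F i (XGS k i (Suc l)) t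
                 - (\<Sum>j\<in>blk_set n blk l. (X k i j - X (Suc k) i j)
                       * partial_d (\<lambda>V. F i V t) (XGS k i (Suc l)) j))) = (\<Sum>k<K. \<Sum>i<N. QQ k i)"
    unfolding QQ_def by (rule sum.swap)
  show ?thesis
    using main[of K] eqA eqQ unfolding SX_def RX_def ZZ_def YY_def FF_def by linarith
qed

end
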